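(* For $|q|<1$, with sums over $i,j,k\in\mathbb{Z}_{\ge0}$, \begin{align*} \sum \frac{q^{\frac{3}{2}i^2+j^2+\frac{1}{2}k^2+2ij+ik+jk}}{(q;q)_i(q;q)_j(q;q)_k}&=\frac{(-q^{\frac{1}{2}};q)_\infty}{(q,q^4;q^5)_\infty}, \\ \sum \frac{q^{\frac{3}{2}i^2+j^2+\frac{1}{2}k^2+2ij+ik+jk+\frac{1}{2}i+\frac{1}{2}k}}{(q;q)_i(q;q)_j(q;q)_k}&=\frac{(-q;q)_\infty}{(q,q^4;q^5)_\infty}, \\ \sum\frac{q^{\frac{3}{2}i^2+j^2+\frac{1}{2}k^2+2ij+ik+jk-\frac{1}{2}i-\frac{1}{2}k}}{(q;q)_i(q;q)_j(q;q)_k}&=2\frac{(-q;q)_\infty}{(q,q^4;q^5)_\infty}, \\ \sum\frac{q^{\frac{3}{2}i^2+j^2+\frac{1}{2}k^2+2ij+ik+jk+i+j}}{(q;q)_i(q;q)_j(q;q)_k}&=\frac{(-q^{\frac{1}{2}};q)_\infty}{(q^2,q^3;q^5)_\infty}, \\ \sum\frac{q^{\frac{3}{2}i^2+j^2+\frac{1}{2}k^2+2ij+ik+jk+\frac{3}{2}i+j+\frac{1}{2}k}}{(q;q)_i(q;q)_j(q;q)_k}&=\frac{(-q;q)_\infty}{(q^2,q^3;q^5)_\infty}, \\ \sum\frac{q^{\frac{3}{2}i^2+j^2+\frac{1}{2}k^2+2ij+ik+jk+\frac{1}{2}i+j-\frac{1}{2}k}}{(q;q)_i(q;q)_j(q;q)_k}&=2\frac{(-q;q)_\infty}{(q^2,q^3;q^5)_\infty}.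 \end{align*}
   Context: For $|q|<1$: $(a;q)_n=\prod_{k=0}^{n-1}(1-aq^k)$ ($(a;q)_0=1$), $(a;q)_\infty=\prod_{k\ge0}(1-aq^k)$, $(a_1,\dots,a_m;q)_\infty=\prod_\ell(a_\ell;q)_\infty$. Half-integer powers of $q$ are taken with respect to a fixed choice of $q^{1/2}$ (e.g. $0<q<1$). *)

theory Defs
  imports "HOL-Analysis.Analysis"
begin

definition qpoch :: "complex \<Rightarrow> complex \<Rightarrow> nat \<Rightarrow> complex" where
  "qpoch a q n = (\<Prod>k<n. 1 - a * q ^ k)"

definition qpoch_inf :: "complex \<Rightarrow> complex \<Rightarrow> complex" where
  "qpoch_inf a q = (\<Prod>k. 1 - a * q ^ k)"

text \<open>Summand of the triple sums, written in terms of r = q^(1/2):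
  r ^ e / ((q;q)_i (q;q)_j (q;q)_k) with q = r^2.\<close>
definition tsum_term :: "complex \<Rightarrow> (nat \<Rightarrow> nat \<Rightarrow> nat \<Rightarrow> nat) \<Rightarrow> nat \<times> nat \<times> nat \<Rightarrow> complex" where
  "tsum_term r e = (\<lambda>(i,j,k). r ^ e i j k /
      (qpoch (r^2) (r^2) i * qpoch (r^2) (r^2) j * qpoch (r^2) (r^2) k))"

end

theory Submission
  imports Defs
begin

definition ip :: "complex \<Rightarrow> int \<Rightarrow> complex" where
  "ip q m = (if m < 0 then 0 else 1 / qpoch q q (nat m))"

definition T :: "int \<Rightarrow> nat" where
  "T j = nat (j * (j - 1) div 2)"

lemma qpoch_Suc: "qpoch a q (Suc n) = qpoch a q n * (1 - a * q ^ n)"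
  by (simp add: qpoch_def)

lemma qpoch_qq_nz:
  assumes "norm q < 1" shows "qpoch q q n \<noteq> 0"
proof -
  have "1 - q * q ^ k \<noteq> 0" for k
  proof
    assume "1 - q * q ^ k = 0"
    hence "q ^ Suc k = 1" by simp
    hence "norm q ^ Suc k = 1" by (metis norm_one norm_power)
    moreover have "norm q ^ Suc k < 1" using assms
      by (meson norm_ge_zero power_less_one_iff zero_less_Suc)
    ultimately show False by simp
  qed
  thus ?thesis by (simp add: qpoch_def)
qed

lemma T_int: "int (T j) = j * (j - 1) div 2"
proof -
  have "j * (j - 1) \<ge> 0"
    by (cases "j \<ge> 1") (auto simp: mult_nonneg_nonneg mult_nonpos_nonpos)
  thus ?thesis unfolding T_def by simp
qed

lemma T_step: "T y = T (y - 1) + nat (y - 1)" if "y \<ge> 1"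
proof -
  have "int (T y) = int (T (y - 1)) + (y - 1)"
    unfolding T_int
  proof -
    have "y * (y - 1) = (y - 1) * (y - 1 - 1) + 2 * (y - 1)" by algebra
    thus "y * (y - 1) div 2 = (y - 1) * (y - 1 - 1) div 2 + (y - 1)" by simp
  qed
  thus ?thesis using that by simp
qed

lemma T_step': "T y = T (y - 1) + nat (y - 1) - nat (1 - y) \<and> T (y - 1) = T y + nat (1 - y) - nat (y - 1)"
proof -
  have "int (T y) = int (T (y - 1)) + (y - 1)"
    unfolding T_int
  proof -
    have "y * (y - 1) = (y - 1) * (y - 1 - 1) + 2 * (y - 1)" by algebra
    thus "y * (y - 1) div 2 = (y - 1) * (y - 1 - 1) div 2 + (y - 1)" by simp
  qed
  thus ?thesis by linarith
qed

lemma ip_neg[simp]: "m < 0 \<Longrightarrow> ip q m = 0"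
  by (simp add: ip_def)

lemma ip_nat: "ip q (int n) = 1 / qpoch q q n"
  by (simp add: ip_def)

lemma ip_0[simp]: "ip q 0 = 1"
  by (simp add: ip_def qpoch_def)

lemma ip_Suc: assumes "norm q < 1"
  shows "ip q (int n + 1) * (1 - q ^ Suc n) = ip q (int n)"
proof -
  have "int n + 1 = int (Suc n)" by simp
  hence "ip q (int n + 1) = 1 / qpoch q q (Suc n)" by (simp only: ip_nat)
  thus ?thesis using qpoch_qq_nz[OF assms, of n] qpoch_qq_nz[OF assms, of "Suc n"]
    by (simp add: ip_nat qpoch_Suc field_simps)
qed

lemma ip_Suc': assumes "norm q < 1"
  shows "ip q (1 + int n) * (1 - q ^ Suc n) = ip q (int n)"
  using ip_Suc[OF assms, of n] by (simp add: add.commute)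

lemma pascal_ip:
  assumes q: "norm q < 1"
  shows "(1 - q ^ Suc M) * ip q (int i) * ip q (int (Suc M) - int i)
       = q ^ i * ip q (int i) * ip q (int M - int i) + ip q (int i - 1) * ip q (int (Suc M) - int i)"
proof (cases "i \<le> Suc M")
  case False
  thus ?thesis by simp
next
  case True
  show ?thesis
  proof (cases "i = 0")
    case True
    have "ip q (int M + 1) * (1 - q ^ Suc M) = ip q (int M)" by (rule ip_Suc[OF q])
    moreover have "int (Suc M) - int i = int M + 1" "int M - int i = int M" "int i - 1 = -1" using True by auto
    ultimately show ?thesis using True by (simp only:) (simp add: mult.commute)
  next
    case i0: False
    show ?thesis
    proof (cases "i = Suc M")
      case True
      have "ip q (int M + 1) * (1 - q ^ Suc M) = ip q (int M)" by (rule ip_Suc[OF q])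
      moreover have "int (Suc M) - int i = 0" "int M - int i = -1" "int i - 1 = int M" "int i = int M + 1"
        using True by auto
      ultimately show ?thesis using True by (simp only:) (simp add: mult.commute)
    next
      case False
      define a where "a = i - 1"
      define b where "b = M - i"
      have ab: "i = Suc a" "Suc M - i = Suc b" "M = a + b + 1"
        using False \<open>i \<le> Suc M\<close> i0 unfolding a_def b_def by auto
      have e1: "int i = int a + 1" "int (Suc M) - int i = int b + 1" "int M - int i = int b"
          "int i - 1 = int a" using ab by auto
      have A: "ip q (int a + 1) * (1 - q ^ Suc a) = ip q (int a)" by (rule ip_Suc[OF q])
      have B: "ip q (int b + 1) * (1 - q ^ Suc b) = ip q (int b)" by (rule ip_Suc[OF q])
      have E: "(1 - q ^ Suc M) = q ^ Suc a * (1 - q ^ Suc b) + (1 - q ^ Suc a)"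
        using ab by (simp add: algebra_simps power_add)
      have "(1 - q ^ Suc M) * ip q (int a + 1) * ip q (int b + 1)
          = q ^ Suc a * ip q (int a + 1) * (ip q (int b + 1) * (1 - q ^ Suc b))
            + (ip q (int a + 1) * (1 - q ^ Suc a)) * ip q (int b + 1)"
        unfolding E by (simp add: algebra_simps)
      also have "\<dots> = q ^ Suc a * ip q (int a + 1) * ip q (int b) + ip q (int a) * ip q (int b + 1)"
        by (simp only: A B)
      finally show ?thesis using e1 ab by (simp only:)
    qed
  qed
qed


lemma T_diff: "int (T y) = int (T (y - 1)) + y - 1"
  unfolding T_int
proof -
  have "y * (y - 1) = (y - 1) * (y - 1 - 1) + 2 * (y - 1)" by algebra
  thus "y * (y - 1) div 2 = (y - 1) * (y - 1 - 1) div 2 + y - 1" by simp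
qed

lemma T_nat_Suc: "T (int (Suc i)) = T (int i) + i"
  using T_diff[of "int (Suc i)"] by simp

lemma T_shift: assumes "c \<ge> 1" shows "T (c - int i) + i = T (c - 1 - int i) + nat (c - 1)"
  using T_diff[of "c - int i"] assms by (simp add: algebra_simps)

lemma qpoch_shift: "qpoch a q (Suc n) = (1 - a) * qpoch (a * q) q n"
  unfolding qpoch_def prod.lessThan_Suc_shift by (simp add: mult_ac)

lemma T_nat_Suc': "T (1 + int i) = T (int i) + i"
  using T_nat_Suc[of i] by simp

lemma T_shift_pow: assumes "c \<ge> 1"
  shows "(q::complex) ^ i * q ^ T (c - int i) = q ^ nat (c - 1) * q ^ T (c - (1 + int i))"
proof -
  have "T (c - int i) + i = T (c - (1 + int i)) + nat (c - 1)"
    using T_shift[OF assms, of i] by (simp add: algebra_simps)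
  hence "q ^ (T (c - int i) + i) = q ^ (T (c - (1 + int i)) + nat (c - 1))" by simp
  thus ?thesis by (simp add: power_add mult_ac)
qed

definition RS :: "complex \<Rightarrow> complex \<Rightarrow> nat \<Rightarrow> complex" where
  "RS q z n = (\<Sum>i\<le>n. q ^ T (int i) * z ^ i * ip q (int i) * ip q (int n - int i))"

lemma rothe:
  assumes q: "norm q < 1"
  shows "RS q z n = qpoch (- z) q n * ip q (int n)"
proof (induction n arbitrary: z)
  case 0
  show ?case by (simp add: RS_def qpoch_def T_def)
next
  case (Suc n)
  have nz: "1 - q ^ Suc n \<noteq> 0"
  proof
    assume "1 - q ^ Suc n = 0"
    hence "norm (q ^ Suc n) = 1" by simp
    moreover have "norm (q ^ Suc n) < 1" using q
      by (metis norm_ge_zero norm_power power_less_one_iff zero_less_Suc)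
    ultimately show False by simp
  qed
  have "(1 - q ^ Suc n) * RS q z (Suc n)
      = (\<Sum>i\<le>Suc n. q ^ T (int i) * z ^ i * ((1 - q ^ Suc n) * ip q (int i) * ip q (int (Suc n) - int i)))"
    unfolding RS_def sum_distrib_left by (rule sum.cong) (simp_all add: algebra_simps)
  also have "\<dots> = (\<Sum>i\<le>Suc n. q ^ T (int i) * z ^ i * (q ^ i * ip q (int i) * ip q (int n - int i)))
      + (\<Sum>i\<le>Suc n. q ^ T (int i) * z ^ i * (ip q (int i - 1) * ip q (int (Suc n) - int i)))"
    unfolding pascal_ip[OF q] by (simp add: algebra_simps sum.distrib)
  also have "(\<Sum>i\<le>Suc n. q ^ T (int i) * z ^ i * (q ^ i * ip q (int i) * ip q (int n - int i)))
      = RS q (z * q) n"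
    unfolding RS_def by (simp add: sum.atMost_Suc power_mult_distrib algebra_simps)
  also have "(\<Sum>i\<le>Suc n. q ^ T (int i) * z ^ i * (ip q (int i - 1) * ip q (int (Suc n) - int i)))
      = z * RS q (z * q) n"
    unfolding RS_def sum.atMost_Suc_shift sum_distrib_left
    by (simp add: T_nat_Suc' power_add power_mult_distrib algebra_simps)
  also have "RS q (z * q) n + z * RS q (z * q) n = (1 + z) * qpoch (- (z * q)) q n * ip q (int n)"
    using Suc.IH[of "z * q"] by (simp add: algebra_simps)
  also have "\<dots> = qpoch (- z) q (Suc n) * ((1 - q ^ Suc n) * ip q (int (Suc n)))"
  proof -
    have e: "(1 - q ^ Suc n) * ip q (int (Suc n)) = ip q (int n)"
      using ip_Suc'[OF q, of n] by (simp add: mult.commute)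
    show ?thesis by (simp only: e qpoch_shift) (simp add: algebra_simps)
  qed
  finally have X: "(1 - q ^ Suc n) * RS q z (Suc n) = (1 - q ^ Suc n) * (qpoch (- z) q (Suc n) * ip q (int (Suc n)))"
    by (simp only: mult_ac)
  show ?case using X mult_left_cancel[OF nz] by blast
qed

definition HH :: "complex \<Rightarrow> complex \<Rightarrow> nat \<Rightarrow> int \<Rightarrow> complex" where
  "HH q x M c = (\<Sum>i\<le>M. (-1) ^ i * q ^ T (c - int i) * x ^ i * ip q (int i) * ip q (int M - int i))"

lemma HH_rec:
  assumes q: "norm q < 1" and c: "c \<ge> 1"
  shows "(1 - q ^ Suc M) * HH q x (Suc M) c = (q ^ nat (c - 1) - x) * HH q x M (c - 1)"
proof -
  have "(1 - q ^ Suc M) * HH q x (Suc M) c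
      = (\<Sum>i\<le>Suc M. (-1) ^ i * q ^ T (c - int i) * x ^ i * ((1 - q ^ Suc M) * ip q (int i) * ip q (int (Suc M) - int i)))"
    unfolding HH_def sum_distrib_left by (rule sum.cong) (simp_all add: algebra_simps)
  also have "\<dots> = (\<Sum>i\<le>Suc M. (-1) ^ i * q ^ T (c - int i) * x ^ i * (q ^ i * ip q (int i) * ip q (int M - int i)))
      + (\<Sum>i\<le>Suc M. (-1) ^ i * q ^ T (c - int i) * x ^ i * (ip q (int i - 1) * ip q (int (Suc M) - int i)))"
    unfolding pascal_ip[OF q] by (simp add: algebra_simps sum.distrib)
  also have "(\<Sum>i\<le>Suc M. (-1) ^ i * q ^ T (c - int i) * x ^ i * (q ^ i * ip q (int i) * ip q (int M - int i)))
      = q ^ nat (c - 1) * HH q x M (c - 1)"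
  proof -
    have "(\<Sum>i\<le>Suc M. (-1) ^ i * q ^ T (c - int i) * x ^ i * (q ^ i * ip q (int i) * ip q (int M - int i)))
       = (\<Sum>i\<le>M. (-1) ^ i * q ^ (T (c - int i) + i) * x ^ i * ip q (int i) * ip q (int M - int i))"
      by (simp add: sum.atMost_Suc power_add algebra_simps)
    also have "\<dots> = (\<Sum>i\<le>M. q ^ nat (c - 1) * ((-1) ^ i * q ^ T (c - 1 - int i) * x ^ i * ip q (int i) * ip q (int M - int i)))"
      by (rule sum.cong) (simp_all add: T_shift_pow[OF c] power_add algebra_simps)
    finally show ?thesis unfolding HH_def sum_distrib_left .
  qed
  also have "(\<Sum>i\<le>Suc M. (-1) ^ i * q ^ T (c - int i) * x ^ i * (ip q (int i - 1) * ip q (int (Suc M) - int i)))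
      = - x * HH q x M (c - 1)"
    unfolding HH_def sum.atMost_Suc_shift sum_distrib_left
    by (simp add: algebra_simps)
  finally show ?thesis by (simp add: algebra_simps)
qed

lemma qpow_nz: assumes "norm q < 1" shows "1 - (q::complex) ^ Suc n \<noteq> 0"
proof
  assume "1 - q ^ Suc n = 0"
  hence "norm (q ^ Suc n) = 1" by simp
  moreover have "norm (q ^ Suc n) < 1" using assms
    by (metis norm_ge_zero norm_power power_less_one_iff zero_less_Suc)
  ultimately show False by simp
qed

lemma ip_nz: assumes "norm q < 1" "m \<ge> 0" shows "ip q m \<noteq> 0"
  using assms qpoch_qq_nz[OF assms(1)] by (simp add: ip_def)

lemma HH_iter:
  assumes q: "norm q < 1"
  shows "int k \<le> c \<Longrightarrow> ip q (int M) * HH q x (M + k) c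
     = ip q (int (M + k)) * (\<Prod>t<k. q ^ nat (c - 1 - int t) - x) * HH q x M (c - int k)"
proof (induction k arbitrary: c)
  case 0
  then show ?case by simp
next
  case (Suc k)
  have c1: "c \<ge> 1" using Suc.prems by simp
  have IH: "ip q (int M) * HH q x (M + k) (c - 1)
     = ip q (int (M + k)) * (\<Prod>t<k. q ^ nat (c - 1 - 1 - int t) - x) * HH q x M (c - 1 - int k)"
    using Suc.IH[of "c - 1"] Suc.prems by simp
  have rec: "(1 - q ^ Suc (M + k)) * HH q x (Suc (M + k)) c = (q ^ nat (c - 1) - x) * HH q x (M + k) (c - 1)"
    by (rule HH_rec[OF q c1])
  have ipS: "ip q (int (M + k)) = ip q (int (M + Suc k)) * (1 - q ^ Suc (M + k))"
    using ip_Suc[OF q, of "M + k"] by (simp add: add.commute add.left_commute)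
  have cS: "c - int (Suc k) = c - 1 - int k" by simp
  have nz: "1 - q ^ Suc (M + k) \<noteq> 0" by (rule qpow_nz[OF q])
  have P: "(\<Prod>t<Suc k. q ^ nat (c - 1 - int t) - x) = (q ^ nat (c - 1) - x) * (\<Prod>t<k. q ^ nat (c - 1 - 1 - int t) - x)"
    unfolding prod.lessThan_Suc_shift by (simp add: algebra_simps)
  have "(1 - q ^ Suc (M + k)) * (ip q (int M) * HH q x (M + Suc k) c)
      = ip q (int M) * ((1 - q ^ Suc (M + k)) * HH q x (Suc (M + k)) c)"
    by (simp add: mult_ac)
  also have "\<dots> = ip q (int M) * ((q ^ nat (c - 1) - x) * HH q x (M + k) (c - 1))"
    by (simp only: rec)
  also have "\<dots> = (q ^ nat (c - 1) - x) * (ip q (int M) * HH q x (M + k) (c - 1))"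
    by (simp add: algebra_simps)
  also have "\<dots> = (q ^ nat (c - 1) - x) * (ip q (int (M + k)) * (\<Prod>t<k. q ^ nat (c - 1 - 1 - int t) - x) * HH q x M (c - 1 - int k))"
    by (simp only: IH)
  also have "\<dots> = (1 - q ^ Suc (M + k)) * (ip q (int (M + Suc k)) * (\<Prod>t<Suc k. q ^ nat (c - 1 - int t) - x) * HH q x M (c - int (Suc k)))"
    unfolding P ipS cS by (simp only: mult_ac)
  finally show ?case using nz by simp
qed

lemma HH_zero:
  assumes q: "norm q < 1"
  shows "1 \<le> c \<Longrightarrow> c \<le> int M \<Longrightarrow> HH q 1 M c = 0"
proof (induction M arbitrary: c)
  case 0
  then show ?case by simp
next
  case (Suc M)
  have "(1 - q ^ Suc M) * HH q 1 (Suc M) c = (q ^ nat (c - 1) - 1) * HH q 1 M (c - 1)"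
    by (rule HH_rec[OF q]) (use Suc.prems in simp)
  also have "\<dots> = 0"
  proof (cases "c = 1")
    case True thus ?thesis by simp
  next
    case False
    hence "HH q 1 M (c - 1) = 0" using Suc.IH[of "c - 1"] Suc.prems by simp
    thus ?thesis by simp
  qed
  finally show ?case using qpow_nz[OF q, of M] by simp
qed

lemma HH_base: "HH q x n 0 = RS q (- (x * q)) n"
  unfolding HH_def RS_def
proof (rule sum.cong[OF refl])
  fix i assume "i \<in> {..n}"
  have "T (0 - int i) = T (int i) + i"
  proof -
    have "int (T (0 - int i)) = int (T (int i)) + int i"
      unfolding T_int by (simp add: algebra_simps)
    thus ?thesis by simp
  qed
  moreover have m: "(- (x * q)) ^ i = (-1) ^ i * x ^ i * q ^ i"
    by (induction i) (simp_all add: algebra_simps)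
  ultimately show "(- 1) ^ i * q ^ T (0 - int i) * x ^ i * ip q (int i) * ip q (int n - int i) =
        q ^ T (int i) * (- (x * q)) ^ i * ip q (int i) * ip q (int n - int i)"
    by (simp add: power_add mult_ac)
qed

lemma HH_closed:
  assumes q: "norm q < 1"
  shows "HH q x (n + n) (int n) = ip q (int (n + n)) * (\<Prod>t<n. q ^ nat (int n - 1 - int t) - x) * qpoch (x * q) q n"
proof -
  have "ip q (int n) * HH q x (n + n) (int n)
      = ip q (int (n + n)) * (\<Prod>t<n. q ^ nat (int n - 1 - int t) - x) * HH q x n (int n - int n)"
    by (rule HH_iter[OF q]) simp
  also have "HH q x n (int n - int n) = qpoch (x * q) q n * ip q (int n)"
    using HH_base[of q x n] rothe[OF q, of "- (x * q)" n] by simp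
  finally have "ip q (int n) * HH q x (n + n) (int n) = ip q (int n) * (ip q (int (n + n)) * (\<Prod>t<n. q ^ nat (int n - 1 - int t) - x) * qpoch (x * q) q n)"
    by (simp add: mult_ac)
  thus ?thesis using ip_nz[OF q, of "int n"] by simp
qed


lemma neg_pow: "(- a) ^ n = (-1) ^ n * (a::complex) ^ n"
  by (rule power_minus)

lemma finite_jtp:
  assumes q: "norm q < 1" and u: "u \<noteq> 0" and uv: "u * v = q"
  shows "(\<Sum>j\<le>n. (-1) ^ j * q ^ T (int j) * u ^ j * ip q (int n - int j) * ip q (int n + int j))
       + (\<Sum>m\<in>{1..n}. (-1) ^ m * q ^ T (int m) * v ^ m * ip q (int n + int m) * ip q (int n - int m))
       = ip q (int (n + n)) * qpoch u q n * qpoch v q n"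
proof -
  define x where "x = 1 / u"
  have xu: "x * u = 1" using u by (simp add: x_def)
  have xq: "x * q = v" using uv u by (simp add: x_def field_simps)
  define g where "g i = (-1) ^ i * q ^ T (int n - int i) * x ^ i * ip q (int i) * ip q (int (n + n) - int i)" for i
  have HHg: "HH q x (n + n) (int n) = (\<Sum>i\<le>n + n. g i)" by (simp add: HH_def g_def)
  have split: "(\<Sum>i\<le>n + n. g i) = (\<Sum>i\<le>n. g i) + (\<Sum>i\<in>{Suc n..n + n}. g i)"
  proof -
    have "{..n + n} = {..n} \<union> {Suc n..n + n}" by auto
    thus ?thesis by (simp add: sum.union_disjoint)
  qed
  have P1: "(-u) ^ n * (\<Sum>i\<le>n. g i) = (\<Sum>j\<le>n. (-1) ^ j * q ^ T (int j) * u ^ j * ip q (int n - int j) * ip q (int n + int j))"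
    unfolding sum_distrib_left
  proof (rule sum.reindex_bij_witness[where i="\<lambda>j. n - j" and j="\<lambda>i. n - i"])
    fix i assume i: "i \<in> {..n}"
    then obtain d where d: "n = i + d" using le_Suc_ex by auto
    have e1: "n - i = d" using d by simp
    have "(-u) ^ n * ((-1) ^ i * x ^ i) = (-1) ^ d * u ^ d * ((-1) ^ i * (-1) ^ i) * (x * u) ^ i"
      unfolding d neg_pow[of u] by (simp add: power_add power_mult_distrib mult_ac)
    also have "\<dots> = (-1) ^ d * u ^ d"
      by (simp add: xu flip: power_add)
    finally have E: "(-u) ^ n * ((-1) ^ i * x ^ i) = (-1) ^ d * u ^ d" .
    have e2: "int n - int i = int d" "int (n + n) - int i = int n + int d" "int n - int d = int i"
      using d by auto
    show "(-1) ^ (n - i) * q ^ T (int (n - i)) * u ^ (n - i) * ip q (int n - int (n - i)) * ip q (int n + int (n - i)) = (-u) ^ n * g i"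
      unfolding g_def e1 e2 using E by (simp add: mult_ac)
  qed auto
  have P2: "(-u) ^ n * (\<Sum>i\<in>{Suc n..n + n}. g i) = (\<Sum>m\<in>{1..n}. (-1) ^ m * q ^ T (int m) * v ^ m * ip q (int n + int m) * ip q (int n - int m))"
    unfolding sum_distrib_left
  proof (rule sum.reindex_bij_witness[where i="\<lambda>m. n + m" and j="\<lambda>i. i - n"])
    fix i assume i: "i \<in> {Suc n..n + n}"
    define m where "m = i - n"
    have m: "i = n + m" "1 \<le> m" "m \<le> n" using i unfolding m_def by auto
    have e1: "i - n = m" using m by simp
    have T1: "T (int n - int i) = T (int m) + m"
    proof -
      have "int (T (int n - int i)) = int (T (int m)) + int m"
        unfolding T_int m(1) by (simp add: algebra_simps)
      thus ?thesis by simp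
    qed
    have "(-u) ^ n * ((-1) ^ i * q ^ T (int n - int i) * x ^ i)
        = ((-1) ^ n * (-1) ^ n) * (u * x) ^ n * ((-1) ^ m * q ^ T (int m) * (x * q) ^ m)"
      unfolding T1 by (unfold m(1) neg_pow[of u]) (simp add: power_add power_mult_distrib mult_ac)
    also have "\<dots> = (-1) ^ m * q ^ T (int m) * v ^ m"
      using xu xq by (simp add: mult.commute[of u x] flip: power_add)
    finally have E: "(-u) ^ n * ((-1) ^ i * q ^ T (int n - int i) * x ^ i) = (-1) ^ m * q ^ T (int m) * v ^ m" .
    have e2: "int (n + n) - int i = int n - int m" "ip q (int i) = ip q (int n + int m)" using m by auto
    show "(-1) ^ (i - n) * q ^ T (int (i - n)) * v ^ (i - n) * ip q (int n + int (i - n)) * ip q (int n - int (i - n)) = (-u) ^ n * g i"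
      unfolding g_def e1 e2 using E by (simp add: mult_ac)
  qed auto
  have Pr: "(-u) ^ n * (\<Prod>t<n. q ^ nat (int n - 1 - int t) - x) = qpoch u q n"
  proof -
    have "(-u) ^ n * (\<Prod>t<n. q ^ nat (int n - 1 - int t) - x) = (\<Prod>t<n. (-u) * (q ^ nat (int n - 1 - int t) - x))"
      by (simp only: prod.distrib prod_constant card_lessThan)
    also have "\<dots> = (\<Prod>t<n. 1 - u * q ^ (n - Suc t))"
    proof (rule prod.cong[OF refl])
      fix t assume "t \<in> {..<n}"
      hence "nat (int n - 1 - int t) = n - Suc t" by auto
      thus "(-u) * (q ^ nat (int n - 1 - int t) - x) = 1 - u * q ^ (n - Suc t)"
        using xu by (simp add: algebra_simps)
    qed
    also have "\<dots> = (\<Prod>t<n. 1 - u * q ^ t)"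
      by (rule prod.nat_diff_reindex)
    finally show ?thesis by (simp add: qpoch_def)
  qed
  have "(-u) ^ n * HH q x (n + n) (int n) = ip q (int (n + n)) * qpoch u q n * qpoch v q n"
    unfolding HH_closed[OF q] using Pr xq by (simp add: mult_ac)
  moreover have "(-u) ^ n * HH q x (n + n) (int n) = (-u) ^ n * (\<Sum>i\<le>n. g i) + (-u) ^ n * (\<Sum>i\<in>{Suc n..n + n}. g i)"
    unfolding HHg split by (simp add: algebra_simps)
  ultimately show ?thesis unfolding P1 P2 by simp
qed


definition alpha :: "complex \<Rightarrow> int \<Rightarrow> complex" where
  "alpha q j = (-1) ^ (nat \<bar>j\<bar>) * q ^ T j"

definition wA :: "complex \<Rightarrow> nat \<Rightarrow> int \<Rightarrow> complex" where
  "wA q A j = q ^ nat (j * (j + int A))"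

lemma sgn_abs: "(-1::complex) ^ (nat \<bar>int a - int b\<bar>) = (-1) ^ a * (-1) ^ b"
proof (cases "b \<le> a")
  case True
  then obtain d where d: "a = b + d" using le_Suc_ex by blast
  hence "nat \<bar>int a - int b\<bar> = d" by simp
  thus ?thesis unfolding d by (simp add: power_add mult_ac)
next
  case False
  then obtain d where d: "b = a + d" using le_Suc_ex[of a b] by auto
  hence "nat \<bar>int a - int b\<bar> = d" by simp
  thus ?thesis unfolding d by (simp add: power_add mult_ac)
qed

lemma unit_pair:
  assumes q: "norm q < 1"
  shows "(\<Sum>j\<in>{- int k - int A..int k}. alpha q j * ip q (int k - j) * ip q (int k + j + int A))
       = (if k = 0 then 1 else 0)"
proof -
  have "(\<Sum>j\<in>{- int k - int A..int k}. alpha q j * ip q (int k - j) * ip q (int k + j + int A))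
      = (\<Sum>i\<le>k + k + A. alpha q (int k - int i) * ip q (int k - (int k - int i)) * ip q (int k + (int k - int i) + int A))"
    by (rule sum.reindex_bij_witness[where i="\<lambda>i. int k - int i" and j="\<lambda>j. nat (int k - j)"]) auto
  also have "\<dots> = (-1) ^ k * HH q 1 (k + k + A) (int k)"
    unfolding HH_def sum_distrib_left
  proof (rule sum.cong[OF refl])
    fix i assume "i \<in> {..k + k + A}"
    have e: "int k - (int k - int i) = int i" "int k + (int k - int i) + int A = int (k + k + A) - int i" by auto
    show "alpha q (int k - int i) * ip q (int k - (int k - int i)) * ip q (int k + (int k - int i) + int A)
        = (-1) ^ k * ((-1) ^ i * q ^ T (int k - int i) * 1 ^ i * ip q (int i) * ip q (int (k + k + A) - int i))"
      unfolding e alpha_def sgn_abs by (simp add: mult_ac)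
  qed
  also have "\<dots> = (if k = 0 then 1 else 0)"
  proof (cases "k = 0")
    case True
    have "HH q 1 A 0 = 1"
      using HH_base[of q 1 A] rothe[OF q, of "- (1 * q)" A] qpoch_qq_nz[OF q, of A]
      by (simp add: ip_nat)
    thus ?thesis using True by simp
  next
    case False
    thus ?thesis using HH_zero[OF q, of "int k" "k + k + A"] by simp
  qed
  finally show ?thesis .
qed

lemma pascal2:
  assumes q: "norm q < 1" and m: "m \<le> Suc N"
  shows "(1 - q ^ Suc N) * ip q (int (Suc N) - int m) * ip q (int m)
       = ip q (int N - int m) * ip q (int m) + q ^ (Suc N - m) * ip q (int (Suc N) - int m) * ip q (int m - 1)"
proof -
  define i where "i = Suc N - m"
  have e: "int i = int (Suc N) - int m" "int (Suc N) - int i = int m" "int N - int i = int m - 1"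
      "int i - 1 = int N - int m" using m unfolding i_def by auto
  have "(1 - q ^ Suc N) * ip q (int i) * ip q (int (Suc N) - int i)
       = q ^ i * ip q (int i) * ip q (int N - int i) + ip q (int i - 1) * ip q (int (Suc N) - int i)"
    by (rule pascal_ip[OF q])
  thus ?thesis unfolding e i_def[symmetric] by (simp add: mult_ac)
qed

lemma G_nat:
  assumes q: "norm q < 1"
  shows "(\<Sum>m\<le>N. q ^ (m * (m + B)) * ip q (int N - int m) * ip q (int m) * ip q (int m + int B))
       = ip q (int N) * ip q (int N + int B)"
proof (induction N arbitrary: B)
  case 0
  then show ?case by simp
next
  case (Suc N)
  have z0: "ip q (int 0 - 1) = 0" by simp
  have "(1 - q ^ Suc N) * (\<Sum>m\<le>Suc N. q ^ (m * (m + B)) * ip q (int (Suc N) - int m) * ip q (int m) * ip q (int m + int B))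
      = (\<Sum>m\<le>Suc N. q ^ (m * (m + B)) * ip q (int m + int B) * ((1 - q ^ Suc N) * ip q (int (Suc N) - int m) * ip q (int m)))"
    unfolding sum_distrib_left by (rule sum.cong[OF refl]) (simp add: mult_ac)
  also have "\<dots> = (\<Sum>m\<le>Suc N. q ^ (m * (m + B)) * ip q (int m + int B) * (ip q (int N - int m) * ip q (int m)))
      + (\<Sum>m\<le>Suc N. q ^ (m * (m + B)) * ip q (int m + int B) * (q ^ (Suc N - m) * ip q (int (Suc N) - int m) * ip q (int m - 1)))"
    unfolding sum.distrib[symmetric]
  proof (rule sum.cong[OF refl])
    fix m assume "m \<in> {..Suc N}"
    hence "m \<le> Suc N" by simp
    note P = pascal2[OF q this]
    show "q ^ (m * (m + B)) * ip q (int m + int B) * ((1 - q ^ Suc N) * ip q (int (Suc N) - int m) * ip q (int m))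
      = q ^ (m * (m + B)) * ip q (int m + int B) * (ip q (int N - int m) * ip q (int m))
      + q ^ (m * (m + B)) * ip q (int m + int B) * (q ^ (Suc N - m) * ip q (int (Suc N) - int m) * ip q (int m - 1))"
      by (simp only: P distrib_left)
  qed
  also have "(\<Sum>m\<le>Suc N. q ^ (m * (m + B)) * ip q (int m + int B) * (ip q (int N - int m) * ip q (int m)))
      = ip q (int N) * ip q (int N + int B)"
    using Suc.IH[of B] by (simp add: mult_ac)
  also have "(\<Sum>m\<le>Suc N. q ^ (m * (m + B)) * ip q (int m + int B) * (q ^ (Suc N - m) * ip q (int (Suc N) - int m) * ip q (int m - 1)))
      = q ^ (N + B + 1) * (\<Sum>m\<le>N. q ^ (m * (m + Suc B)) * ip q (int N - int m) * ip q (int m) * ip q (int m + int (Suc B)))"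
    unfolding sum.atMost_Suc_shift sum_distrib_left z0 mult_zero_right add_0
  proof (rule sum.cong[OF refl])
    fix m assume "m \<in> {..N}"
    hence mN: "m \<le> N" by simp
    have ex: "Suc m * (Suc m + B) + (Suc N - Suc m) = m * (m + Suc B) + (N + B + 1)"
      using mN by (simp add: algebra_simps)
    have e: "int (Suc m) + int B = int m + int (Suc B)" "int (Suc N) - int (Suc m) = int N - int m" "int (Suc m) - 1 = int m"
      by auto
    show "q ^ (Suc m * (Suc m + B)) * ip q (int (Suc m) + int B) * (q ^ (Suc N - Suc m) * ip q (int (Suc N) - int (Suc m)) * ip q (int (Suc m) - 1))
        = q ^ (N + B + 1) * (q ^ (m * (m + Suc B)) * ip q (int N - int m) * ip q (int m) * ip q (int m + int (Suc B)))"
    proof -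
      have "q ^ (Suc m * (Suc m + B)) * q ^ (Suc N - Suc m) = q ^ (N + B + 1) * q ^ (m * (m + Suc B))"
        unfolding power_add[symmetric] ex by (simp add: add.commute)
      thus ?thesis unfolding e by (simp add: mult_ac) (metis mult.assoc mult.commute)
    qed
  qed
  also have "\<dots> = q ^ (N + B + 1) * (ip q (int N) * ip q (int N + int (Suc B)))"
    using Suc.IH[of "Suc B"] by simp
  finally have L: "(1 - q ^ Suc N) * (\<Sum>m\<le>Suc N. q ^ (m * (m + B)) * ip q (int (Suc N) - int m) * ip q (int m) * ip q (int m + int B))
     = ip q (int N) * ip q (int N + int B) + q ^ (N + B + 1) * (ip q (int N) * ip q (int N + int (Suc B)))" .
  have i1: "ip q (int N + int B) = ip q (int N + int (Suc B)) * (1 - q ^ (N + B + 1))"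
    using ip_Suc[OF q, of "N + B"] by (simp add: add.commute add.left_commute)
  have i2: "ip q (int N) = ip q (int (Suc N)) * (1 - q ^ Suc N)"
    using ip_Suc[OF q, of "N"] by (simp add: add.commute add.left_commute)
  have e: "int (Suc N) + int B = int N + int (Suc B)" by simp
  have "(1 - q ^ Suc N) * (\<Sum>m\<le>Suc N. q ^ (m * (m + B)) * ip q (int (Suc N) - int m) * ip q (int m) * ip q (int m + int B))
     = (1 - q ^ Suc N) * (ip q (int (Suc N)) * ip q (int (Suc N) + int B))"
    unfolding L i1 i2 e by (simp add: algebra_simps)
  thus ?case using qpow_nz[OF q, of N] by simp
qed

lemma wA_nat: "wA q A (int k) = q ^ (k * (k + A))"
proof -
  have "int k * (int k + int A) = int (k * (k + A))" by simp
  hence "nat (int k * (int k + int A)) = k * (k + A)" by (simp only: nat_int)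
  thus ?thesis by (simp add: wA_def)
qed

lemma G_pos:
  assumes q: "norm q < 1"
  shows "(\<Sum>k\<le>n. wA q A (int k) * ip q (int n - int k) * ip q (int k - int j0) * ip q (int k + int j0 + int A))
       = wA q A (int j0) * ip q (int n - int j0) * ip q (int n + int j0 + int A)"
proof (cases "j0 \<le> n")
  case False
  have "ip q (int n - int j0) = 0" using False by simp
  moreover have "(\<Sum>k\<le>n. wA q A (int k) * ip q (int n - int k) * ip q (int k - int j0) * ip q (int k + int j0 + int A)) = 0"
    using False by (intro sum.neutral) auto
  ultimately show ?thesis by simp
next
  case True
  define N where "N = n - j0"
  define B where "B = j0 + j0 + A"
  define f where "f k = wA q A (int k) * ip q (int n - int k) * ip q (int k - int j0) * ip q (int k + int j0 + int A)" for k
  have "(\<Sum>k\<le>n. f k) = (\<Sum>k\<in>{j0..n}. f k)"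
    by (rule sum.mono_neutral_right) (auto simp: f_def)
  also have "\<dots> = (\<Sum>m\<in>{0..N}. f (m + j0))"
    using sum.shift_bounds_cl_nat_ivl[of f 0 j0 N] True by (simp add: N_def)
  also have "\<dots> = (\<Sum>m\<le>N. wA q A (int j0) * (q ^ (m * (m + B)) * ip q (int N - int m) * ip q (int m) * ip q (int m + int B)))"
    unfolding atLeast0AtMost
  proof (rule sum.cong[OF refl])
    fix m assume "m \<in> {..N}"
    have ex: "(m + j0) * (m + j0 + A) = j0 * (j0 + A) + m * (m + B)"
      by (simp add: B_def algebra_simps)
    have e: "int n - int (m + j0) = int N - int m" "int (m + j0) - int j0 = int m"
      "int (m + j0) + int j0 + int A = int m + int B" using True by (auto simp: N_def B_def)
    show "f (m + j0) = wA q A (int j0) * (q ^ (m * (m + B)) * ip q (int N - int m) * ip q (int m) * ip q (int m + int B))"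
      unfolding f_def wA_nat ex e power_add by (simp add: mult_ac)
  qed
  also have "\<dots> = wA q A (int j0) * (ip q (int N) * ip q (int N + int B))"
    unfolding sum_distrib_left[symmetric] G_nat[OF q] ..
  also have "\<dots> = wA q A (int j0) * ip q (int n - int j0) * ip q (int n + int j0 + int A)"
  proof -
    have e1: "int N = int n - int j0" and e2: "int N + int B = int n + int j0 + int A" using True by (auto simp: N_def B_def)
    have "ip q (int N) = ip q (int n - int j0)" by (simp only: e1)
    moreover have "ip q (int N + int B) = ip q (int n + int j0 + int A)" by (simp only: e2)
    ultimately show ?thesis by (simp add: mult_ac)
  qed
  finally show ?thesis unfolding f_def .
qed

lemma G_int:
  assumes q: "norm q < 1" and A: "A \<le> 1"
  shows "(\<Sum>k\<le>n. wA q A (int k) * ip q (int n - int k) * ip q (int k - j) * ip q (int k + j + int A))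
       = wA q A j * ip q (int n - j) * ip q (int n + j + int A)"
proof (cases "j \<ge> 0")
  case True
  then obtain j0 where "j = int j0" by (metis nonneg_eq_int)
  thus ?thesis using G_pos[OF q] by simp
next
  case False
  define j0 where "j0 = nat (- j - int A)"
  have j0: "int j0 = - j - int A" using False A unfolding j0_def by auto
  have w: "wA q A j = wA q A (int j0)"
  proof -
    have "j * (j + int A) = int j0 * (int j0 + int A)" unfolding j0 by (simp add: algebra_simps)
    thus ?thesis by (simp add: wA_def)
  qed
  have "(\<Sum>k\<le>n. wA q A (int k) * ip q (int n - int k) * ip q (int k - j) * ip q (int k + j + int A))
      = (\<Sum>k\<le>n. wA q A (int k) * ip q (int n - int k) * ip q (int k - int j0) * ip q (int k + int j0 + int A))"
  proof (rule sum.cong[OF refl])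
    fix k assume "k \<in> {..n}"
    have e1: "int k - j = int k + int j0 + int A" and e2: "int k + j + int A = int k - int j0" unfolding j0 by auto
    have "ip q (int k - j) = ip q (int k + int j0 + int A)" "ip q (int k + j + int A) = ip q (int k - int j0)"
      by (simp only: e1) (simp only: e2)
    thus "wA q A (int k) * ip q (int n - int k) * ip q (int k - j) * ip q (int k + j + int A)
        = wA q A (int k) * ip q (int n - int k) * ip q (int k - int j0) * ip q (int k + int j0 + int A)"
      by (simp add: mult_ac)
  qed
  also have "\<dots> = wA q A (int j0) * ip q (int n - int j0) * ip q (int n + int j0 + int A)"
    by (rule G_pos[OF q])
  also have "\<dots> = wA q A j * ip q (int n - j) * ip q (int n + j + int A)"
  proof -
    have e1: "int n - j = int n + int j0 + int A" and e2: "int n + j + int A = int n - int j0" unfolding j0 by auto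
    have "ip q (int n - j) = ip q (int n + int j0 + int A)" "ip q (int n + j + int A) = ip q (int n - int j0)"
      by (simp only: e1) (simp only: e2)
    thus ?thesis using w by (simp add: mult_ac)
  qed
  finally show ?thesis .
qed

lemma bailey:
  assumes q: "norm q < 1" and A: "A \<le> 1"
  assumes beta: "\<And>k. \<beta> k = (\<Sum>j\<in>{- int k - int A..int k}. \<alpha> j * ip q (int k - j) * ip q (int k + j + int A))"
  shows "(\<Sum>k\<le>n. wA q A (int k) * ip q (int n - int k) * \<beta> k)
       = (\<Sum>j\<in>{- int n - int A..int n}. wA q A j * \<alpha> j * ip q (int n - j) * ip q (int n + j + int A))"
proof -
  have b2: "\<beta> k = (\<Sum>j\<in>{- int n - int A..int n}. \<alpha> j * ip q (int k - j) * ip q (int k + j + int A))"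
    if "k \<le> n" for k
    unfolding beta using that by (intro sum.mono_neutral_left) auto
  have "(\<Sum>k\<le>n. wA q A (int k) * ip q (int n - int k) * \<beta> k)
      = (\<Sum>k\<le>n. \<Sum>j\<in>{- int n - int A..int n}. \<alpha> j * (wA q A (int k) * ip q (int n - int k) * ip q (int k - j) * ip q (int k + j + int A)))"
    by (rule sum.cong[OF refl]) (simp add: b2 sum_distrib_left mult_ac)
  also have "\<dots> = (\<Sum>j\<in>{- int n - int A..int n}. \<Sum>k\<le>n. \<alpha> j * (wA q A (int k) * ip q (int n - int k) * ip q (int k - j) * ip q (int k + j + int A)))"
    by (rule sum.swap)
  also have "\<dots> = (\<Sum>j\<in>{- int n - int A..int n}. \<alpha> j * (wA q A j * ip q (int n - j) * ip q (int n + j + int A)))"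
    by (rule sum.cong[OF refl]) (simp only: sum_distrib_left[symmetric] G_int[OF q A])
  finally show ?thesis by (simp add: mult_ac)
qed

lemma key_identity:
  assumes q: "norm q < 1" and A: "A \<le> 1"
  shows "(\<Sum>k\<le>n. q ^ (k * (k + A)) * ip q (int n - int k) * ip q (int k))
       = (\<Sum>j\<in>{- int n - int A..int n}. wA q A j * (wA q A j * alpha q j) * ip q (int n - j) * ip q (int n + j + int A))"
proof -
  have step1: "ip q (int k) = (\<Sum>j\<in>{- int k - int A..int k}. (wA q A j * alpha q j) * ip q (int k - j) * ip q (int k + j + int A))" for k
  proof -
    have "(\<Sum>k'\<le>k. wA q A (int k') * ip q (int k - int k') * (if k' = 0 then 1 else 0))
        = (\<Sum>j\<in>{- int k - int A..int k}. wA q A j * alpha q j * ip q (int k - j) * ip q (int k + j + int A))"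
      by (rule bailey[OF q A]) (rule unit_pair[OF q, symmetric])
    moreover have "(\<Sum>k'\<le>k. wA q A (int k') * ip q (int k - int k') * (if k' = 0 then 1 else 0)) = ip q (int k)"
      by (simp add: sum.atMost_shift wA_def)
    ultimately show ?thesis by simp
  qed
  have "(\<Sum>k\<le>n. wA q A (int k) * ip q (int n - int k) * ip q (int k))
      = (\<Sum>j\<in>{- int n - int A..int n}. wA q A j * (wA q A j * alpha q j) * ip q (int n - j) * ip q (int n + j + int A))"
    by (rule bailey[OF q A]) (rule step1)
  thus ?thesis by (simp add: wA_nat)
qed

lemma qpoch_conv:
  assumes q: "norm q < 1"
  shows "convergent_prod (\<lambda>k. 1 - a * q ^ k)" "(\<lambda>n. qpoch a q n) \<longlonglongrightarrow> qpoch_inf a q"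
proof -
  have "summable (\<lambda>k. norm ((1 - a * q ^ k) - 1))"
  proof -
    have "summable (\<lambda>k. norm a * norm q ^ k)"
      using q by (intro summable_mult summable_geometric) simp
    thus ?thesis by (simp add: norm_mult norm_power)
  qed
  hence "abs_convergent_prod (\<lambda>k. 1 - a * q ^ k)"
    by (rule summable_imp_abs_convergent_prod)
  thus cp: "convergent_prod (\<lambda>k. 1 - a * q ^ k)"
    by (rule abs_convergent_prod_imp_convergent_prod)
  have "(\<lambda>n. \<Prod>i\<le>n. 1 - a * q ^ i) \<longlonglongrightarrow> qpoch_inf a q"
    unfolding qpoch_inf_def by (rule convergent_prod_LIMSEQ[OF cp])
  hence "(\<lambda>n. qpoch a q (n + 1)) \<longlonglongrightarrow> qpoch_inf a q"
    by (simp add: qpoch_def lessThan_Suc_atMost)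
  thus "(\<lambda>n. qpoch a q n) \<longlonglongrightarrow> qpoch_inf a q"
    by (rule LIMSEQ_offset)
qed

lemma qpoch_inf_nz:
  assumes q: "norm q < 1" and a: "norm a < 1"
  shows "qpoch_inf a q \<noteq> 0"
  unfolding qpoch_inf_def
proof (rule prodinf_nonzero)
  show "convergent_prod (\<lambda>k. 1 - a * q ^ k)" by (rule qpoch_conv(1)[OF q])
  fix k
  have "norm (a * q ^ k) < 1"
  proof -
    have "norm (q ^ k) \<le> 1" using q by (simp add: norm_power power_le_one)
    hence "norm a * norm (q ^ k) \<le> norm a" by (simp add: mult_left_le)
    thus ?thesis using a by (simp add: norm_mult)
  qed
  thus "1 - a * q ^ k \<noteq> 0" by auto
qed

lemma Pinf_nz: assumes q: "norm q < 1" shows "qpoch_inf q q \<noteq> 0"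
  using qpoch_inf_nz[OF q q] .

lemma qpoch_inf_shift:
  assumes q: "norm q < 1"
  shows "qpoch_inf a q = (1 - a) * qpoch_inf (a * q) q"
proof -
  have "(\<lambda>n. qpoch a q (Suc n)) \<longlonglongrightarrow> qpoch_inf a q"
    using LIMSEQ_Suc[OF qpoch_conv(2)[OF q]] .
  moreover have "(\<lambda>n. qpoch a q (Suc n)) \<longlonglongrightarrow> (1 - a) * qpoch_inf (a * q) q"
    unfolding qpoch_shift by (intro tendsto_mult tendsto_const qpoch_conv(2)[OF q])
  ultimately show ?thesis using LIMSEQ_unique by blast
qed

lemma qpoch_inf_split:
  assumes q: "norm q < 1"
  shows "qpoch_inf a q = qpoch a q n * qpoch_inf (a * q ^ n) q"
proof (induction n arbitrary: a)
  case 0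
  then show ?case by (simp add: qpoch_def)
next
  case (Suc n)
  have "qpoch_inf a q = (1 - a) * qpoch_inf (a * q) q" by (rule qpoch_inf_shift[OF q])
  also have "qpoch_inf (a * q) q = qpoch (a * q) q n * qpoch_inf (a * q * q ^ n) q" by (rule Suc.IH)
  finally show ?case by (simp add: qpoch_shift mult_ac)
qed

lemma ip_lim:
  assumes q: "norm q < 1"
  shows "(\<lambda>n. ip q (int n + c)) \<longlonglongrightarrow> 1 / qpoch_inf q q"
proof -
  have L: "(\<lambda>n. ip q (int n)) \<longlonglongrightarrow> 1 / qpoch_inf q q"
    unfolding ip_nat by (intro tendsto_divide tendsto_const qpoch_conv(2)[OF q] Pinf_nz[OF q])
  show ?thesis
  proof (cases "c \<ge> 0")
    case True
    then obtain d where d: "c = int d" by (metis nonneg_eq_int)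
    have "(\<lambda>n. ip q (int (n + d))) \<longlonglongrightarrow> 1 / qpoch_inf q q"
      using LIMSEQ_ignore_initial_segment[OF L, of d] .
    thus ?thesis unfolding d by simp
  next
    case False
    define d where "d = nat (- c)"
    have d: "c = - int d" using False unfolding d_def by simp
    have "(\<lambda>n. ip q (int (n + d) + c)) \<longlonglongrightarrow> 1 / qpoch_inf q q"
      unfolding d using L by simp
    thus ?thesis by (rule LIMSEQ_offset)
  qed
qed

lemma ip_bound:
  assumes q: "norm q < 1"
  obtains K where "K > 0" "\<And>m. norm (ip q m) \<le> K"
proof -
  have "convergent (\<lambda>n. ip q (int n + 0))" using ip_lim[OF q, of 0] by (auto simp: convergent_def)
  hence "Bseq (\<lambda>n. ip q (int n))" by (simp add: convergent_imp_Bseq)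
  then obtain K where K: "K > 0" "\<And>n. norm (ip q (int n)) \<le> K" unfolding Bseq_def by blast
  have "norm (ip q m) \<le> K" for m
  proof (cases "m \<ge> 0")
    case True
    then obtain n where "m = int n" by (metis nonneg_eq_int)
    thus ?thesis using K by simp
  next
    case False thus ?thesis using K by simp
  qed
  thus ?thesis using K that by blast
qed

lemma tannery_seq:
  fixes a :: "nat \<Rightarrow> nat \<Rightarrow> complex"
  assumes lim: "\<And>k. (\<lambda>n. a k n) \<longlonglongrightarrow> b k"
  assumes bound: "\<And>k n. norm (a k n) \<le> M k"
  assumes M: "summable M"
  shows "summable b" "(\<lambda>n. suminf (\<lambda>k. a k n)) \<longlonglongrightarrow> suminf b"
proof -
  have ev: "eventually (\<lambda>(k,n). norm (a k n) \<le> M k) (at_top \<times>\<^sub>F sequentially)"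
    using bound by (intro always_eventually) auto
  note T = tannerys_theorem[OF lim ev M]
  show "summable b" using T by (auto intro: summable_norm_cancel)
  show "(\<lambda>n. suminf (\<lambda>k. a k n)) \<longlonglongrightarrow> suminf b" using T by simp
qed

lemma summable_pow_pred:
  assumes "0 \<le> (x::real)" "x < 1"
  shows "summable (\<lambda>k. x ^ (k - 1))"
proof -
  have "summable (\<lambda>k. x ^ ((k + 1) - 1))" using assms by (simp add: summable_geometric)
  thus ?thesis by (subst (asm) summable_iff_shift)
qed

lemma T_ge: "k - 1 \<le> T (int k)"
proof -
  have "int (T (int k)) = int k * (int k - 1) div 2" by (rule T_int)
  moreover have "int k * (int k - 1) div 2 \<ge> int k - 1"
  proof (cases "k \<ge> 2")
    case True
    hence "int k * (int k - 1) \<ge> 2 * (int k - 1)" by (intro mult_right_mono) auto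
    hence "(2 * (int k - 1)) div 2 \<le> int k * (int k - 1) div 2" by (intro zdiv_mono1) auto
    thus ?thesis by simp
  next
    case False
    hence "k = 0 \<or> k = 1" by auto
    thus ?thesis by auto
  qed
  ultimately show ?thesis by linarith
qed

lemma norm_summable_bound:
  fixes f :: "nat \<Rightarrow> complex"
  assumes "\<And>k. norm (f k) \<le> M k" "summable M"
  shows "summable (\<lambda>k. norm (f k))"
  by (rule summable_comparison_test[OF _ assms(2)]) (use assms(1) in auto)

lemma ip_lim_diff:
  assumes q: "norm q < 1"
  shows "(\<lambda>n. ip q (int n - int k)) \<longlonglongrightarrow> 1 / qpoch_inf q q"
  using ip_lim[OF q, of "- int k"] by simp

lemma euler:
  assumes q: "norm q < 1" and z: "norm z \<le> 1"
  shows "(\<lambda>k. q ^ T (int k) * z ^ k * ip q (int k)) sums qpoch_inf (- z) q"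
    "summable (\<lambda>k. norm (q ^ T (int k) * z ^ k * ip q (int k)))"
proof -
  obtain K where K: "K > 0" "\<And>m. norm (ip q m) \<le> K" using ip_bound[OF q] by blast
  define L where "L = 1 / qpoch_inf q q"
  have L0: "L \<noteq> 0" using Pinf_nz[OF q] by (simp add: L_def)
  define f where "f k = q ^ T (int k) * z ^ k * ip q (int k)" for k
  define a where "a k n = f k * ip q (int n - int k)" for k n
  define M where "M k = K * K * norm q ^ (k - 1)" for k
  have M: "summable M" unfolding M_def
    by (intro summable_mult summable_pow_pred) (use q in auto)
  have fb: "norm (f k) \<le> K * norm q ^ (k - 1)" for k
  proof -
    have "norm q ^ T (int k) \<le> norm q ^ (k - 1)"
      by (rule power_decreasing[OF T_ge]) (use q in auto)
    moreover have "norm z ^ k \<le> 1" using z by (simp add: power_le_one)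
    ultimately have "norm q ^ T (int k) * norm z ^ k \<le> norm q ^ (k - 1) * 1"
      by (intro mult_mono) auto
    hence "norm q ^ T (int k) * norm z ^ k * norm (ip q (int k)) \<le> norm q ^ (k - 1) * K"
      by (intro mult_mono K(2)) auto
    thus ?thesis by (simp add: f_def norm_mult norm_power mult_ac)
  qed
  have bound: "norm (a k n) \<le> M k" for k n
  proof -
    have "norm (f k) * norm (ip q (int n - int k)) \<le> (K * norm q ^ (k - 1)) * K"
      by (intro mult_mono fb K(2)) (use K(1) in auto)
    thus ?thesis by (simp add: a_def M_def norm_mult mult_ac)
  qed
  have lim: "(\<lambda>n. a k n) \<longlonglongrightarrow> f k * L" for k
    unfolding a_def L_def by (intro tendsto_mult tendsto_const ip_lim_diff[OF q])
  note T = tannery_seq[OF lim bound M]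
  have "(\<lambda>n. suminf (\<lambda>k. a k n)) = (\<lambda>n. qpoch (- z) q n * ip q (int n))"
  proof
    fix n
    have "suminf (\<lambda>k. a k n) = (\<Sum>k\<le>n. a k n)"
      by (rule suminf_finite) (auto simp: a_def)
    also have "\<dots> = RS q z n" by (simp add: RS_def a_def f_def mult_ac)
    finally show "suminf (\<lambda>k. a k n) = qpoch (- z) q n * ip q (int n)" using rothe[OF q] by simp
  qed
  moreover have "(\<lambda>n. qpoch (- z) q n * ip q (int n)) \<longlonglongrightarrow> qpoch_inf (- z) q * L"
    unfolding L_def using ip_lim[OF q, of 0] by (intro tendsto_mult qpoch_conv(2)[OF q]) simp_all
  ultimately have "suminf (\<lambda>k. f k * L) = qpoch_inf (- z) q * L"
    using T(2) LIMSEQ_unique by metis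
  moreover have sf: "summable f"
  proof -
    have "summable (\<lambda>k. (f k * L) * (1 / L))" by (intro summable_mult2 T(1))
    thus ?thesis using L0 by simp
  qed
  ultimately have "suminf f * L = qpoch_inf (- z) q * L" by (simp add: suminf_mult2)
  hence "suminf f = qpoch_inf (- z) q" using L0 by simp
  thus "(\<lambda>k. q ^ T (int k) * z ^ k * ip q (int k)) sums qpoch_inf (- z) q"
    using sf unfolding f_def by (metis summable_sums)
  show "summable (\<lambda>k. norm (q ^ T (int k) * z ^ k * ip q (int k)))"
    using fb unfolding f_def
    by (intro norm_summable_bound[where M="\<lambda>k. K * norm q ^ (k - 1)"] summable_mult summable_pow_pred) (use q in auto)
qed

lemma ip_lim_double:
  assumes q: "norm q < 1"
  shows "(\<lambda>n. ip q (int (n + n))) \<longlonglongrightarrow> 1 / qpoch_inf q q"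
proof -
  have sm: "strict_mono (\<lambda>n::nat. n + n)" by (rule strict_monoI) simp
  have "((\<lambda>n. ip q (int n + 0)) \<circ> (\<lambda>n. n + n)) \<longlonglongrightarrow> 1 / qpoch_inf q q"
    by (rule LIMSEQ_subseq_LIMSEQ[OF ip_lim[OF q] sm])
  thus ?thesis by (simp add: o_def)
qed

lemma jtp:
  assumes p: "norm p < 1" and u: "u \<noteq> 0" "norm u < 1" and v: "norm v < 1" and uv: "u * v = p"
  shows "summable (\<lambda>k. (-1) ^ k * p ^ T (int k) * u ^ k)"
    "summable (\<lambda>k. (-1) ^ Suc k * p ^ T (int (Suc k)) * v ^ Suc k)"
    "suminf (\<lambda>k. (-1) ^ k * p ^ T (int k) * u ^ k) + suminf (\<lambda>k. (-1) ^ Suc k * p ^ T (int (Suc k)) * v ^ Suc k)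
      = qpoch_inf u p * qpoch_inf v p * qpoch_inf p p"
proof -
  obtain K where K: "K > 0" "\<And>m. norm (ip p m) \<le> K" using ip_bound[OF p] by blast
  define L where "L = 1 / qpoch_inf p p"
  have L0: "L \<noteq> 0" using Pinf_nz[OF p] by (simp add: L_def)
  define d1 where "d1 k = (-1) ^ k * p ^ T (int k) * u ^ k" for k
  define d2 where "d2 k = (-1) ^ Suc k * p ^ T (int (Suc k)) * v ^ Suc k" for k
  define a1 where "a1 k n = d1 k * (ip p (int n - int k) * ip p (int n + int k))" for k n
  define a2 where "a2 k n = d2 k * (ip p (int n + int (Suc k)) * ip p (int n - int (Suc k)))" for k n
  have pT: "norm p ^ T (int k) \<le> 1" for k using p by (simp add: power_le_one)
  have b1: "norm (a1 k n) \<le> K * K * norm u ^ k" for k n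
  proof -
    have "norm (d1 k) \<le> norm u ^ k"
      using mult_mono[OF pT order_refl, of "norm u ^ k"] by (simp add: d1_def norm_mult norm_power)
    moreover have "norm (ip p (int n - int k) * ip p (int n + int k)) \<le> K * K"
      unfolding norm_mult by (intro mult_mono K(2)) (use K in auto)
    ultimately have "norm (d1 k) * norm (ip p (int n - int k) * ip p (int n + int k)) \<le> norm u ^ k * (K * K)"
      by (intro mult_mono) auto
    thus ?thesis by (simp add: a1_def norm_mult mult_ac)
  qed
  have b2: "norm (a2 k n) \<le> K * K * norm v ^ k" for k n
  proof -
    have "norm (d2 k) \<le> norm v ^ k"
    proof -
      have "norm (d2 k) = norm p ^ T (int (Suc k)) * (norm v * norm v ^ k)"
        by (simp add: d2_def norm_mult norm_power)
      also have "\<dots> \<le> 1 * (1 * norm v ^ k)"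
        using v by (intro mult_mono pT) auto
      finally show ?thesis by simp
    qed
    moreover have "norm (ip p (int n + int (Suc k)) * ip p (int n - int (Suc k))) \<le> K * K"
      unfolding norm_mult by (intro mult_mono K(2)) (use K in auto)
    ultimately have "norm (d2 k) * norm (ip p (int n + int (Suc k)) * ip p (int n - int (Suc k))) \<le> norm v ^ k * (K * K)"
      by (intro mult_mono) auto
    thus ?thesis by (simp add: a2_def norm_mult mult_ac)
  qed
  have M1: "summable (\<lambda>k. K * K * norm u ^ k)" using u by (intro summable_mult summable_geometric) auto
  have M2: "summable (\<lambda>k. K * K * norm v ^ k)" using v by (intro summable_mult summable_geometric) auto
  have l1: "(\<lambda>n. a1 k n) \<longlonglongrightarrow> d1 k * (L * L)" for k
    unfolding a1_def L_def using ip_lim[OF p, of "int k"]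
    by (intro tendsto_mult tendsto_const ip_lim_diff[OF p]) simp_all
  have l2: "(\<lambda>n. a2 k n) \<longlonglongrightarrow> d2 k * (L * L)" for k
    unfolding a2_def L_def using ip_lim[OF p, of "int (Suc k)"]
    by (intro tendsto_mult tendsto_const ip_lim_diff[OF p]) simp_all
  note T1 = tannery_seq[OF l1 b1 M1]
  note T2 = tannery_seq[OF l2 b2 M2]
  have s1: "summable d1"
  proof -
    have "summable (\<lambda>k. (d1 k * (L * L)) * (1 / (L * L)))" by (intro summable_mult2 T1(1))
    thus ?thesis using L0 by simp
  qed
  have s2: "summable d2"
  proof -
    have "summable (\<lambda>k. (d2 k * (L * L)) * (1 / (L * L)))" by (intro summable_mult2 T2(1))
    thus ?thesis using L0 by simp
  qed
  show "summable (\<lambda>k. (-1) ^ k * p ^ T (int k) * u ^ k)" using s1 by (simp add: d1_def[abs_def])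
  show "summable (\<lambda>k. (-1) ^ Suc k * p ^ T (int (Suc k)) * v ^ Suc k)" using s2 by (simp add: d2_def[abs_def])
  have eq: "suminf (\<lambda>k. a1 k n) + suminf (\<lambda>k. a2 k n) = ip p (int (n + n)) * qpoch u p n * qpoch v p n" for n
  proof -
    have "suminf (\<lambda>k. a1 k n) = (\<Sum>k\<le>n. a1 k n)"
      by (rule suminf_finite) (auto simp: a1_def)
    moreover have "suminf (\<lambda>k. a2 k n) = (\<Sum>k<n. a2 k n)"
      by (rule suminf_finite) (auto simp: a2_def)
    moreover have "(\<Sum>k<n. a2 k n) = (\<Sum>m\<in>{1..n}. (-1) ^ m * p ^ T (int m) * v ^ m * ip p (int n + int m) * ip p (int n - int m))"
      by (rule sum.reindex_bij_witness[where i="\<lambda>m. m - 1" and j="Suc"]) (auto simp: a2_def d2_def mult_ac)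
    moreover have "(\<Sum>k\<le>n. a1 k n) = (\<Sum>j\<le>n. (-1) ^ j * p ^ T (int j) * u ^ j * ip p (int n - int j) * ip p (int n + int j))"
      by (simp add: a1_def d1_def mult_ac)
    ultimately show ?thesis using finite_jtp[OF p u(1) uv, of n] by simp
  qed
  have "(\<lambda>n. suminf (\<lambda>k. a1 k n) + suminf (\<lambda>k. a2 k n)) \<longlonglongrightarrow> suminf (\<lambda>k. d1 k * (L * L)) + suminf (\<lambda>k. d2 k * (L * L))"
    by (intro tendsto_add T1(2) T2(2))
  moreover have "(\<lambda>n. suminf (\<lambda>k. a1 k n) + suminf (\<lambda>k. a2 k n)) \<longlonglongrightarrow> L * qpoch_inf u p * qpoch_inf v p"
    unfolding eq L_def by (intro tendsto_mult qpoch_conv(2)[OF p] ip_lim_double[OF p])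
  ultimately have "suminf (\<lambda>k. d1 k * (L * L)) + suminf (\<lambda>k. d2 k * (L * L)) = L * qpoch_inf u p * qpoch_inf v p"
    using LIMSEQ_unique by blast
  hence "(suminf d1 + suminf d2) * (L * L) = L * qpoch_inf u p * qpoch_inf v p"
    using s1 s2 by (simp add: suminf_mult2 distrib_right)
  hence "L * ((suminf d1 + suminf d2) * L - qpoch_inf u p * qpoch_inf v p) = 0"
    by (simp add: algebra_simps)
  hence "(suminf d1 + suminf d2) * L = qpoch_inf u p * qpoch_inf v p" using L0 by simp
  hence "suminf d1 + suminf d2 = qpoch_inf u p * qpoch_inf v p / L"
    using L0 by (simp add: field_simps)
  thus "suminf (\<lambda>k. (-1) ^ k * p ^ T (int k) * u ^ k) + suminf (\<lambda>k. (-1) ^ Suc k * p ^ T (int (Suc k)) * v ^ Suc k)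
      = qpoch_inf u p * qpoch_inf v p * qpoch_inf p p"
    using Pinf_nz[OF p] by (simp add: d1_def[abs_def] d2_def[abs_def] L_def)
qed

lemma split_Z:
  "(\<Sum>j\<in>{- int n - int A..int n}. F j) = (\<Sum>k\<le>n. F (int k)) + (\<Sum>k<n + A. F (- int k - 1))"
proof -
  have U: "{- int n - int A..int n} = {0..int n} \<union> {- int n - int A..-1}" by auto
  have "(\<Sum>j\<in>{- int n - int A..int n}. F j) = (\<Sum>j\<in>{0..int n}. F j) + (\<Sum>j\<in>{- int n - int A..-1}. F j)"
    unfolding U by (rule sum.union_disjoint) auto
  moreover have "(\<Sum>j\<in>{0..int n}. F j) = (\<Sum>k\<le>n. F (int k))"
    by (rule sum.reindex_bij_witness[where i="int" and j="nat"]) auto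
  moreover have "(\<Sum>j\<in>{- int n - int A..-1}. F j) = (\<Sum>k<n + A. F (- int k - 1))"
    by (rule sum.reindex_bij_witness[where i="\<lambda>k. - int k - 1" and j="\<lambda>j. nat (- j - 1)"]) auto
  ultimately show ?thesis by simp
qed

lemma T2: "k * k = 2 * T (int k) + k"
proof -
  have "int (T (int k)) = int k * (int k - 1) div 2" by (rule T_int)
  moreover have "even (int k * (int k - 1))" by simp
  ultimately have "2 * int (T (int k)) = int k * (int k - 1)" by simp
  hence "int (2 * T (int k) + k) = int (k * k)" by (simp add: algebra_simps)
  thus ?thesis by linarith
qed

lemma T_negS: "T (- int k - 1) = T (int (Suc k)) + Suc k"
proof -
  have "int (T (- int k - 1)) = int (T (int (Suc k))) + int (Suc k)"
    unfolding T_int by (simp add: algebra_simps)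
  thus ?thesis by linarith
qed

lemma c_pos:
  assumes A: "A \<le> 1"
  shows "wA q A (int k) * (wA q A (int k) * alpha q (int k)) = (-1) ^ k * (q ^ 5) ^ T (int k) * (q ^ (2 + 2 * A)) ^ k"
proof -
  have e: "k * (k + A) + k * (k + A) + T (int k) = 5 * T (int k) + (2 + 2 * A) * k"
    using T2[of k] by (simp add: algebra_simps)
  have "wA q A (int k) * (wA q A (int k) * alpha q (int k)) = (-1) ^ k * q ^ (k * (k + A) + k * (k + A) + T (int k))"
    by (simp add: wA_nat alpha_def power_add mult_ac)
  also have "\<dots> = (-1) ^ k * (q ^ 5) ^ T (int k) * (q ^ (2 + 2 * A)) ^ k"
    unfolding e power_add power_mult by (simp only: mult.assoc)
  finally show ?thesis .
qed

lemma c_neg: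
  assumes A: "A \<le> 1"
  shows "wA q A (- int k - 1) * (wA q A (- int k - 1) * alpha q (- int k - 1))
       = (-1) ^ Suc k * (q ^ 5) ^ T (int (Suc k)) * (q ^ (3 - 2 * A)) ^ Suc k"
proof -
  define x where "x = Suc k"
  have al: "alpha q (- int k - 1) = (-1) ^ x * q ^ (T (int x) + x)"
  proof -
    have "nat \<bar>- int k - 1\<bar> = x" by (simp add: x_def)
    thus ?thesis unfolding alpha_def T_negS x_def by simp
  qed
  have w: "wA q A (- int k - 1) = q ^ (x * (x - A))"
  proof -
    have "(- int k - 1) * (- int k - 1 + int A) = int (x * (x - A))"
    proof (cases "A = 0")
      case True thus ?thesis by (simp add: x_def algebra_simps)
    next
      case False hence "A = 1" using A by simp
      thus ?thesis by (simp add: x_def algebra_simps)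
    qed
    thus ?thesis unfolding wA_def by (simp only: nat_int)
  qed
  have e: "x * (x - A) + x * (x - A) + (T (int x) + x) = 5 * T (int x) + (3 - 2 * A) * x"
  proof (cases "A = 0")
    case True
    thus ?thesis using T2[of x] by (simp add: algebra_simps)
  next
    case False
    hence A1: "A = 1" using A by simp
    have "x * (x - 1) = 2 * T (int x)" using T2[of x] by (simp add: algebra_simps diff_mult_distrib2)
    thus ?thesis unfolding A1 by simp
  qed
  have "wA q A (- int k - 1) * (wA q A (- int k - 1) * alpha q (- int k - 1))
      = (-1) ^ x * q ^ (x * (x - A) + x * (x - A) + (T (int x) + x))"
    unfolding w al by (simp add: power_add mult_ac)
  also have "\<dots> = (-1) ^ x * (q ^ 5) ^ T (int x) * (q ^ (3 - 2 * A)) ^ x"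
    unfolding e power_add power_mult by (simp only: mult.assoc)
  finally show ?thesis unfolding x_def .
qed


lemma norm_pow_le: "norm ((q::complex) ^ a) ^ k \<le> norm q ^ k" if "norm q < 1" "a \<ge> 1"
proof -
  have "norm (q ^ a) \<le> norm q"
    using power_decreasing[OF that(2), of "norm q"] that(1) by (simp add: norm_power)
  thus ?thesis by (intro power_mono) auto
qed

lemma RR:
  assumes q: "norm q < 1" and q0: "q \<noteq> 0" and A: "A \<le> 1"
  defines "u \<equiv> q ^ (2 + 2 * A)" and "v \<equiv> q ^ (3 - 2 * A)"
  shows "(\<lambda>k. q ^ (k * (k + A)) * ip q (int k)) sums
           (qpoch_inf u (q ^ 5) * qpoch_inf v (q ^ 5) * qpoch_inf (q ^ 5) (q ^ 5) / qpoch_inf q q)"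
    "summable (\<lambda>k. norm (q ^ (k * (k + A)) * ip q (int k)))"
proof -
  define p where "p = q ^ 5"
  have pw: "norm (q ^ n) < 1" if "n > 0" for n
    unfolding norm_power using power_less_one_iff[of "norm q" n] that q by simp
  have p: "norm p < 1" unfolding p_def by (rule pw) simp
  have nu: "norm u < 1" unfolding u_def by (rule pw) simp
  have nv: "norm v < 1" unfolding v_def by (rule pw) (use A in simp)
  have u0: "u \<noteq> 0" unfolding u_def using q0 by simp
  have uv: "u * v = p"
  proof -
    have "2 + 2 * A + (3 - 2 * A) = 5" using A by simp
    thus ?thesis unfolding u_def v_def p_def power_add[symmetric] by simp
  qed
  obtain K where K: "K > 0" "\<And>m. norm (ip q m) \<le> K" using ip_bound[OF q] by blast
  define L where "L = 1 / qpoch_inf q q"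
  have L0: "L \<noteq> 0" using Pinf_nz[OF q] by (simp add: L_def)
  define c where "c j = wA q A j * (wA q A j * alpha q j)" for j
  define f where "f k = q ^ (k * (k + A)) * ip q (int k)" for k
  define a0 where "a0 k n = f k * ip q (int n - int k)" for k n
  define a1 where "a1 k n = c (int k) * (ip q (int n - int k) * ip q (int n + int k + int A))" for k n
  define a2 where "a2 k n = c (- int k - 1) * (ip q (int n - (- int k - 1)) * ip q (int n + (- int k - 1) + int A))" for k n
  have KK: "norm (ip q x * ip q y) \<le> K * K" for x y
    unfolding norm_mult by (intro mult_mono K(2)) (use K in auto)
  have fb: "norm (f k) \<le> K * norm q ^ k" for k
  proof -
    have "norm q ^ (k * (k + A)) \<le> norm q ^ k"
    proof (cases k)
      case 0 thus ?thesis by simp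
    next
      case (Suc k') thus ?thesis using q by (intro power_decreasing) auto
    qed
    hence "norm q ^ (k * (k + A)) * norm (ip q (int k)) \<le> norm q ^ k * K"
      by (intro mult_mono K(2)) auto
    thus ?thesis by (simp add: f_def norm_mult norm_power mult_ac)
  qed
  have b0: "norm (a0 k n) \<le> K * K * norm q ^ k" for k n
  proof -
    have "norm (f k) * norm (ip q (int n - int k)) \<le> (K * norm q ^ k) * K"
      by (intro mult_mono fb K(2)) (use K in auto)
    thus ?thesis by (simp add: a0_def norm_mult mult_ac)
  qed
  have cpos: "c (int k) = (-1) ^ k * p ^ T (int k) * u ^ k" for k
    unfolding c_def c_pos[OF A] p_def u_def ..
  have cneg: "c (- int k - 1) = (-1) ^ Suc k * p ^ T (int (Suc k)) * v ^ Suc k" for k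
    unfolding c_def c_neg[OF A] p_def v_def ..
  have pT: "norm p ^ T (int k) \<le> 1" for k using p by (simp add: power_le_one)
  have b1: "norm (a1 k n) \<le> K * K * norm u ^ k" for k n
  proof -
    have "norm (c (int k)) \<le> norm u ^ k"
      unfolding cpos using mult_mono[OF pT order_refl, of "norm u ^ k"] by (simp add: norm_mult norm_power)
    thus ?thesis unfolding a1_def norm_mult[of "c (int k)"]
      using mult_mono[OF _ KK, of "norm (c (int k))" "norm u ^ k"] by (simp add: mult_ac)
  qed
  have b2: "norm (a2 k n) \<le> K * K * norm v ^ k" for k n
  proof -
    have "norm (c (- int k - 1)) \<le> norm v ^ k"
    proof -
      have "norm (c (- int k - 1)) = norm p ^ T (int (Suc k)) * (norm v * norm v ^ k)"
        unfolding cneg by (simp add: norm_mult norm_power)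
      also have "\<dots> \<le> 1 * (1 * norm v ^ k)"
        using nv by (intro mult_mono pT) auto
      finally show ?thesis by simp
    qed
    thus ?thesis unfolding a2_def norm_mult[of "c (- int k - 1)"]
      using mult_mono[OF _ KK, of "norm (c (- int k - 1))" "norm v ^ k"] by (simp add: mult_ac)
  qed
  have M0: "summable (\<lambda>k. K * K * norm q ^ k)" using q by (intro summable_mult summable_geometric) auto
  have M1: "summable (\<lambda>k. K * K * norm u ^ k)" using nu by (intro summable_mult summable_geometric) auto
  have M2: "summable (\<lambda>k. K * K * norm v ^ k)" using nv by (intro summable_mult summable_geometric) auto
  have l0: "(\<lambda>n. a0 k n) \<longlonglongrightarrow> f k * L" for k
    unfolding a0_def L_def by (intro tendsto_mult tendsto_const ip_lim_diff[OF q])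
  have l1: "(\<lambda>n. a1 k n) \<longlonglongrightarrow> c (int k) * (L * L)" for k
  proof -
    have e: "(\<lambda>n. ip q (int n + int k + int A)) \<longlonglongrightarrow> 1 / qpoch_inf q q"
      using ip_lim[OF q, of "int k + int A"] by (simp add: add.assoc)
    show ?thesis
      unfolding a1_def L_def by (intro tendsto_mult tendsto_const ip_lim_diff[OF q] e)
  qed
  have l2: "(\<lambda>n. a2 k n) \<longlonglongrightarrow> c (- int k - 1) * (L * L)" for k
  proof -
    have e1: "(\<lambda>n. ip q (int n - (- int k - 1))) \<longlonglongrightarrow> 1 / qpoch_inf q q"
    proof -
      have "(\<lambda>n. ip q (int n - (- int k - 1))) = (\<lambda>n. ip q (int n + (int k + 1)))"
        by (rule ext) (simp add: algebra_simps)
      thus ?thesis using ip_lim[OF q, of "int k + 1"] by simp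
    qed
    have e2: "(\<lambda>n. ip q (int n + (- int k - 1) + int A)) \<longlonglongrightarrow> 1 / qpoch_inf q q"
    proof -
      have "(\<lambda>n. ip q (int n + (- int k - 1) + int A)) = (\<lambda>n. ip q (int n + (int A - int k - 1)))"
        by (rule ext) (simp add: algebra_simps)
      thus ?thesis using ip_lim[OF q, of "int A - int k - 1"] by simp
    qed
    show ?thesis
      unfolding a2_def L_def by (intro tendsto_mult tendsto_const e1 e2)
  qed
  note T0 = tannery_seq[OF l0 b0 M0]
  note T1 = tannery_seq[OF l1 b1 M1]
  note T2 = tannery_seq[OF l2 b2 M2]
  have eq: "suminf (\<lambda>k. a0 k n) = suminf (\<lambda>k. a1 k n) + suminf (\<lambda>k. a2 k n)" for n
  proof -
    have "suminf (\<lambda>k. a0 k n) = (\<Sum>k\<le>n. a0 k n)"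
      by (rule suminf_finite) (auto simp: a0_def)
    moreover have "suminf (\<lambda>k. a1 k n) = (\<Sum>k\<le>n. a1 k n)"
      by (rule suminf_finite) (auto simp: a1_def)
    moreover have "suminf (\<lambda>k. a2 k n) = (\<Sum>k<n + A. a2 k n)"
      by (rule suminf_finite) (auto simp: a2_def)
    moreover have "(\<Sum>k\<le>n. a0 k n) = (\<Sum>k\<le>n. q ^ (k * (k + A)) * ip q (int n - int k) * ip q (int k))"
      by (simp add: a0_def f_def mult_ac)
    moreover have "(\<Sum>k\<le>n. a1 k n) + (\<Sum>k<n + A. a2 k n)
        = (\<Sum>j\<in>{- int n - int A..int n}. wA q A j * (wA q A j * alpha q j) * ip q (int n - j) * ip q (int n + j + int A))"
      unfolding split_Z by (simp add: a1_def a2_def c_def mult_ac)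
    ultimately show ?thesis using key_identity[OF q A, of n] by simp
  qed
  have "(\<lambda>n. suminf (\<lambda>k. a0 k n)) \<longlonglongrightarrow> suminf (\<lambda>k. c (int k) * (L * L)) + suminf (\<lambda>k. c (- int k - 1) * (L * L))"
    unfolding eq by (intro tendsto_add T1(2) T2(2))
  hence "suminf (\<lambda>k. f k * L) = suminf (\<lambda>k. c (int k) * (L * L)) + suminf (\<lambda>k. c (- int k - 1) * (L * L))"
    using T0(2) LIMSEQ_unique by blast
  moreover have sf: "summable f"
  proof -
    have "summable (\<lambda>k. (f k * L) * (1 / L))" by (intro summable_mult2 T0(1))
    thus ?thesis using L0 by simp
  qed
  moreover have s1: "summable (\<lambda>k. c (int k))"
    unfolding cpos by (rule jtp(1)[OF p u0 nu nv uv])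
  moreover have s2: "summable (\<lambda>k. c (- int k - 1))"
    unfolding cneg by (rule jtp(2)[OF p u0 nu nv uv])
  ultimately have "suminf f * L = (suminf (\<lambda>k. c (int k)) + suminf (\<lambda>k. c (- int k - 1))) * (L * L)"
    by (simp add: suminf_mult2 distrib_right)
  also have "suminf (\<lambda>k. c (int k)) + suminf (\<lambda>k. c (- int k - 1)) = qpoch_inf u p * qpoch_inf v p * qpoch_inf p p"
    unfolding cpos cneg by (rule jtp(3)[OF p u0 nu nv uv])
  finally have "L * (suminf f - qpoch_inf u p * qpoch_inf v p * qpoch_inf p p * L) = 0"
    by (simp add: algebra_simps)
  hence "suminf f = qpoch_inf u p * qpoch_inf v p * qpoch_inf p p * L" using L0 by simp
  hence "f sums (qpoch_inf u p * qpoch_inf v p * qpoch_inf p p * L)"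
    using sf by (metis summable_sums)
  thus "(\<lambda>k. q ^ (k * (k + A)) * ip q (int k)) sums
           (qpoch_inf u (q ^ 5) * qpoch_inf v (q ^ 5) * qpoch_inf (q ^ 5) (q ^ 5) / qpoch_inf q q)"
    unfolding f_def[abs_def] L_def p_def by simp
  show "summable (\<lambda>k. norm (q ^ (k * (k + A)) * ip q (int k)))"
    using fb unfolding f_def
    by (intro norm_summable_bound[where M="\<lambda>k. K * norm q ^ k"] summable_mult summable_geometric) (use q in auto)
qed

lemma triple_summable:
  fixes a b c :: "nat \<Rightarrow> real"
  assumes a: "summable a" "\<And>n. a n \<ge> 0" and b: "summable b" "\<And>n. b n \<ge> 0"
      and c: "summable c" "\<And>n. c n \<ge> 0"
  shows "(\<lambda>(i,j,k). a i * b j * c k) summable_on UNIV"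
proof -
  have ha: "(a has_sum suminf a) UNIV" using a by (intro sums_nonneg_imp_has_sum summable_sums) auto
  have hb: "(b has_sum suminf b) UNIV" using b by (intro sums_nonneg_imp_has_sum summable_sums) auto
  have hc: "(c has_sum suminf c) UNIV" using c by (intro sums_nonneg_imp_has_sum summable_sums) auto
  have p2: "(\<lambda>(j,k). b j * c k) summable_on (Sigma UNIV (\<lambda>_. UNIV))"
  proof (rule summable_on_SigmaI[where g="\<lambda>j. b j * suminf c"])
    show "((\<lambda>k. case (j, k) of (j, k) \<Rightarrow> b j * c k) has_sum b j * suminf c) UNIV" for j
      using has_sum_cmult_right[OF hc, of "b j"] by simp
    show "(\<lambda>j. b j * suminf c) summable_on UNIV"
      using has_sum_cmult_left[OF hb, of "suminf c"] by (auto simp: summable_on_def)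
  qed (use b c in auto)
  hence p2': "(\<lambda>(j,k). b j * c k) summable_on UNIV" by simp
  obtain S2 where S2: "((\<lambda>(j,k). b j * c k) has_sum S2) UNIV" using p2' by (auto simp: summable_on_def)
  have "(\<lambda>(i,jk). a i * (case jk of (j,k) \<Rightarrow> b j * c k)) summable_on (Sigma UNIV (\<lambda>_. UNIV))"
  proof (rule summable_on_SigmaI[where g="\<lambda>i. a i * S2"])
    show "((\<lambda>jk. case (i, jk) of (i, jk) \<Rightarrow> a i * (case jk of (j,k) \<Rightarrow> b j * c k)) has_sum a i * S2) UNIV" for i
      using has_sum_cmult_right[OF S2, of "a i"] by simp
    show "(\<lambda>i. a i * S2) summable_on UNIV"
      using has_sum_cmult_left[OF ha, of S2] by (auto simp: summable_on_def)
  qed (use a b c in \<open>auto split: prod.splits\<close>)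
  moreover have "(\<lambda>(i,jk). a i * (case jk of (j,k) \<Rightarrow> b j * c k)) = (\<lambda>(i,j,k). a i * b j * c k)"
    by (auto simp: fun_eq_iff)
  ultimately show ?thesis by simp
qed


lemma tsum_term_ip: "tsum_term r e (i, j, k) = r ^ e i j k * (ip (r^2) (int i) * ip (r^2) (int j) * ip (r^2) (int k))"
  by (simp add: tsum_term_def ip_nat)

lemma generic:
  fixes r :: complex and e :: "nat \<Rightarrow> nat \<Rightarrow> nat \<Rightarrow> nat"
  assumes r: "norm r < 1" and s: "s \<le> 2"
  assumes e: "\<And>i j k. e i j k = 2 * ((i + j) * (i + j + A)) + (2 * T (int i) + s * i) + (2 * T (int k) + s * k) + 2 * (i + j) * k"
  assumes RRs: "(\<lambda>n. (r^2) ^ (n * (n + A)) * ip (r^2) (int n)) sums R"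
      "summable (\<lambda>n. norm ((r^2) ^ (n * (n + A)) * ip (r^2) (int n)))"
  shows "(tsum_term r e has_sum qpoch_inf (- (r ^ s)) (r ^ 2) * R) UNIV"
proof -
  define q where "q = r ^ 2"
  define y where "y = r ^ s"
  define \<rho> where "\<rho> = norm r"
  have q: "norm q < 1" unfolding q_def using r by (simp add: norm_power power_less_one_iff)
  have y: "norm y \<le> 1" unfolding y_def using r by (simp add: norm_power power_le_one)
  have \<rho>: "0 \<le> \<rho>" "\<rho> < 1" using r by (auto simp: \<rho>_def)
  obtain K where K: "K > 0" "\<And>m. norm (ip q m) \<le> K" using ip_bound[OF q] by blast
  define f where "f = tsum_term r e"
  have f: "f (i, j, k) = r ^ e i j k * (ip q (int i) * ip q (int j) * ip q (int k))" for i j k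
    unfolding f_def q_def by (rule tsum_term_ip)
  have fsum: "f summable_on UNIV"
  proof -
    have sp: "summable (\<lambda>k. \<rho> ^ (k - 1))" by (rule summable_pow_pred) (use \<rho> in auto)
    have maj: "(\<lambda>(i,j,k). (K * \<rho> ^ i) * (K * \<rho> ^ j) * (K * \<rho> ^ (k - 1))) summable_on UNIV"
      by (rule triple_summable) (use \<rho> K sp in \<open>auto intro!: summable_mult summable_geometric\<close>)
    have "(\<lambda>x. norm (f x)) summable_on UNIV"
    proof (rule Infinite_Sum.abs_summable_on_comparison_test'[OF maj])
      fix x :: "nat \<times> nat \<times> nat"
      obtain i j k where x: "x = (i, j, k)" by (cases x) auto
      have ge: "i + j + (k - 1) \<le> e i j k"
      proof -
        have "i + j \<le> (i + j) * (i + j + A)" by (cases "i + j") auto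
        moreover have "k - 1 \<le> 2 * T (int k)" using T_ge[of k] by simp
        ultimately show ?thesis unfolding e by linarith
      qed
      have "\<rho> ^ e i j k \<le> \<rho> ^ (i + j + (k - 1))" by (rule power_decreasing[OF ge]) (use \<rho> in auto)
      hence pr: "\<rho> ^ e i j k \<le> \<rho> ^ i * \<rho> ^ j * \<rho> ^ (k - 1)" by (simp add: power_add)
      have "norm (ip q (int i) * ip q (int j) * ip q (int k)) \<le> K * K * K"
        unfolding norm_mult by (intro mult_mono K(2)) (use K in auto)
      hence "\<rho> ^ e i j k * norm (ip q (int i) * ip q (int j) * ip q (int k)) \<le> (\<rho> ^ i * \<rho> ^ j * \<rho> ^ (k - 1)) * (K * K * K)"
        by (intro mult_mono pr) (use \<rho> in auto)
      thus "norm (f x) \<le> (case x of (i, j, k) \<Rightarrow> K * \<rho> ^ i * (K * \<rho> ^ j) * (K * \<rho> ^ (k - 1)))"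
        unfolding x f by (simp add: norm_mult norm_power \<rho>_def mult_ac)
    qed
    thus ?thesis by (rule abs_summable_summable)
  qed
  define C where "C i j = r ^ (2 * ((i + j) * (i + j + A)) + (2 * T (int i) + s * i)) * (ip q (int i) * ip q (int j))" for i j
  define Ez where "Ez n = qpoch_inf (- (y * q ^ n)) q" for n
  define Y where "Y = qpoch_inf (- y) q"
  define G where "G x = C (fst x) (snd x) * Ez (fst x + snd x)" for x
  define f2 where "f2 x = f (fst (fst x), snd (fst x), snd x)" for x
  have inner: "((\<lambda>k. f2 ((i, j), k)) has_sum G (i, j)) UNIV" for i j
  proof -
    define z where "z = y * q ^ (i + j)"
    have z: "norm z \<le> 1"
    proof -
      have "norm (q ^ (i + j)) \<le> 1" using q by (simp add: norm_power power_le_one)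
      thus ?thesis unfolding z_def norm_mult using y mult_mono[of "norm y" 1 "norm (q ^ (i + j))" 1] by simp
    qed
    have h: "((\<lambda>k. q ^ T (int k) * z ^ k * ip q (int k)) has_sum qpoch_inf (- z) q) UNIV"
      by (rule norm_summable_imp_has_sum[OF euler(2)[OF q z] euler(1)[OF q z]])
    have "((\<lambda>k. C i j * (q ^ T (int k) * z ^ k * ip q (int k))) has_sum C i j * qpoch_inf (- z) q) UNIV"
      by (rule has_sum_cmult_right[OF h])
    moreover have "f2 ((i, j), k) = C i j * (q ^ T (int k) * z ^ k * ip q (int k))" for k
    proof -
      have a: "(r ^ 2) ^ T (int k) = r ^ (2 * T (int k))" by (simp only: power_mult)
      have b: "(r ^ s * (r ^ 2) ^ (i + j)) ^ k = r ^ (s * k) * r ^ (2 * (i + j) * k)"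
        by (simp only: power_mult_distrib power_mult)
      have c: "r ^ e i j k = r ^ (2 * ((i + j) * (i + j + A)) + (2 * T (int i) + s * i)) * (r ^ (2 * T (int k)) * (r ^ (s * k) * r ^ (2 * (i + j) * k)))"
        unfolding e by (simp only: power_add mult_ac)
      have "r ^ e i j k = r ^ (2 * ((i + j) * (i + j + A)) + (2 * T (int i) + s * i)) * (q ^ T (int k) * z ^ k)"
        unfolding c z_def q_def y_def a b ..
      thus ?thesis unfolding f2_def by (simp add: f C_def mult_ac)
    qed
    ultimately show ?thesis by (simp add: G_def Ez_def z_def)
  qed
  have f2sum: "f2 summable_on Sigma UNIV (\<lambda>_. UNIV)"
  proof -
    have "f summable_on UNIV \<longleftrightarrow> f2 summable_on (UNIV :: ((nat \<times> nat) \<times> nat) set)"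
      by (rule summable_on_reindex_bij_witness[where j="\<lambda>(i,j,k). ((i,j),k)" and i="\<lambda>((i,j),k). (i,j,k)"])
         (auto simp: f2_def)
    thus ?thesis using fsum by simp
  qed
  have Gsum: "G summable_on UNIV"
  proof -
    have "(\<lambda>x. infsum (\<lambda>k. f2 (x, k)) UNIV) summable_on UNIV"
      using summable_on_SigmaD[OF f2sum] inner by (auto simp: summable_on_def)
    moreover have "infsum (\<lambda>k. f2 (x, k)) UNIV = G x" for x
      using inner[of "fst x" "snd x"] by (intro infsumI) simp
    ultimately show ?thesis by simp
  qed
  define G' where "G' x = G (snd x, fst x - snd x)" for x
  have reG: "(G has_sum RY) UNIV = (G' has_sum RY) (Sigma UNIV (\<lambda>n. {..n}))" for RY
    by (rule has_sum_reindex_bij_witness[where j="\<lambda>(i,j). (i+j, i)" and i="\<lambda>(n,i). (i, n-i)"])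
       (auto simp: G'_def)
  have G'sum: "G' summable_on Sigma UNIV (\<lambda>n. {..n})"
    using Gsum reG by (auto simp: summable_on_def)
  have innerG: "((\<lambda>i. G' (n, i)) has_sum (q ^ (n * (n + A)) * ip q (int n) * Y)) {..n}" for n
  proof -
    have "(\<Sum>i\<le>n. G' (n, i)) = (\<Sum>i\<le>n. (q ^ (n * (n + A)) * Ez n) * (q ^ T (int i) * y ^ i * ip q (int i) * ip q (int n - int i)))"
    proof (rule sum.cong[OF refl])
      fix i assume "i \<in> {..n}"
      hence i: "i \<le> n" by simp
      have e1: "i + (n - i) = n" using i by simp
      have e2: "int (n - i) = int n - int i" using i by simp
      have "r ^ (2 * (n * (n + A)) + (2 * T (int i) + s * i)) = q ^ (n * (n + A)) * (q ^ T (int i) * y ^ i)"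
        unfolding q_def y_def by (simp add: power_add power_mult)
      thus "G' (n, i) = (q ^ (n * (n + A)) * Ez n) * (q ^ T (int i) * y ^ i * ip q (int i) * ip q (int n - int i))"
        unfolding G'_def G_def C_def by (simp add: e1 e2 mult_ac)
    qed
    also have "\<dots> = (q ^ (n * (n + A)) * Ez n) * RS q y n"
      unfolding RS_def sum_distrib_left ..
    also have "\<dots> = q ^ (n * (n + A)) * ip q (int n) * Y"
      unfolding rothe[OF q] Y_def Ez_def using qpoch_inf_split[OF q, of "- y" n] by (simp add: mult_ac)
    finally show ?thesis by (metis has_sum_finite finite_atMost)
  qed
  have outer: "((\<lambda>n. q ^ (n * (n + A)) * ip q (int n) * Y) has_sum R * Y) UNIV"
    using has_sum_cmult_left[OF norm_summable_imp_has_sum[OF RRs(2) RRs(1)], of Y] unfolding q_def .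
  have "(G' has_sum R * Y) (Sigma UNIV (\<lambda>n. {..n}))"
    by (rule has_sum_SigmaI[OF innerG outer G'sum])
  hence Ghas: "(G has_sum R * Y) UNIV" using reG by simp
  have "(f2 has_sum R * Y) (Sigma UNIV (\<lambda>_. UNIV))"
    by (rule has_sum_SigmaI[OF _ Ghas f2sum]) (use inner in auto)
  hence "(f2 has_sum R * Y) UNIV" by simp
  moreover have "(f has_sum R * Y) UNIV \<longleftrightarrow> (f2 has_sum R * Y) (UNIV :: ((nat \<times> nat) \<times> nat) set)"
    by (rule has_sum_reindex_bij_witness[where j="\<lambda>(i,j,k). ((i,j),k)" and i="\<lambda>((i,j),k). (i,j,k)"])
       (auto simp: f2_def)
  ultimately have "(f has_sum R * Y) UNIV" by simp
  thus ?thesis unfolding f_def Y_def y_def q_def by (simp add: mult.commute)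
qed

lemma qpoch_Suc5: "qpoch a q (Suc (Suc (Suc (Suc (Suc m)))))
   = qpoch a q m * (1 - a * q ^ m) * (1 - a * q ^ Suc m) * (1 - a * q ^ Suc (Suc m))
     * (1 - a * q ^ Suc (Suc (Suc m))) * (1 - a * q ^ Suc (Suc (Suc (Suc m))))"
  by (simp add: qpoch_Suc)

lemma dissect_fin:
  "qpoch q q (5 * n) = qpoch q (q ^ 5) n * qpoch (q ^ 2) (q ^ 5) n * qpoch (q ^ 3) (q ^ 5) n
      * qpoch (q ^ 4) (q ^ 5) n * qpoch (q ^ 5) (q ^ 5) n"
proof (induction n)
  case 0
  then show ?case by (simp add: qpoch_def)
next
  case (Suc n)
  define X where "X = q ^ (5 * n)"
  have X: "(q ^ 5) ^ n = X" unfolding X_def by (simp add: power_mult)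
  have e: "5 * Suc n = Suc (Suc (Suc (Suc (Suc (5 * n)))))" by simp
  have p0: "q * q ^ (5 * n) = q * X" and p1: "q * q ^ Suc (5 * n) = q ^ 2 * X"
    and p2: "q * q ^ Suc (Suc (5 * n)) = q ^ 3 * X" and p3: "q * q ^ Suc (Suc (Suc (5 * n))) = q ^ 4 * X"
    and p4: "q * q ^ Suc (Suc (Suc (Suc (5 * n)))) = q ^ 5 * X"
    unfolding X_def by (simp_all add: power_add power2_eq_square power3_eq_cube numeral_eq_Suc)
  show ?case
    unfolding e qpoch_Suc5 qpoch_Suc Suc.IH p0 p1 p2 p3 p4 X by (simp only: mult_ac)
qed

lemma dissect:
  assumes q: "norm q < 1"
  shows "qpoch_inf q q = qpoch_inf q (q ^ 5) * qpoch_inf (q ^ 2) (q ^ 5) * qpoch_inf (q ^ 3) (q ^ 5)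
      * qpoch_inf (q ^ 4) (q ^ 5) * qpoch_inf (q ^ 5) (q ^ 5)"
proof -
  have q5: "norm (q ^ 5) < 1" using q by (simp add: norm_power power_less_one_iff)
  have sm: "strict_mono (\<lambda>n::nat. 5 * n)" by (rule strict_monoI) simp
  have "((\<lambda>n. qpoch q q n) \<circ> (\<lambda>n. 5 * n)) \<longlonglongrightarrow> qpoch_inf q q"
    by (rule LIMSEQ_subseq_LIMSEQ[OF qpoch_conv(2)[OF q] sm])
  hence "(\<lambda>n. qpoch q q (5 * n)) \<longlonglongrightarrow> qpoch_inf q q" by (simp add: o_def)
  moreover have "(\<lambda>n. qpoch q q (5 * n)) \<longlonglongrightarrow> qpoch_inf q (q ^ 5) * qpoch_inf (q ^ 2) (q ^ 5) * qpoch_inf (q ^ 3) (q ^ 5)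
      * qpoch_inf (q ^ 4) (q ^ 5) * qpoch_inf (q ^ 5) (q ^ 5)"
    unfolding dissect_fin by (intro tendsto_mult qpoch_conv(2)[OF q5])
  ultimately show ?thesis using LIMSEQ_unique by blast
qed

lemma qpoch_inf_zero_base: "qpoch_inf 0 q = 1"
  by (simp add: qpoch_inf_def)

lemma RR_final:
  assumes q: "norm q < 1" and A: "A \<le> 1"
  defines "R \<equiv> (if A = 0 then 1 / (qpoch_inf q (q ^ 5) * qpoch_inf (q ^ 4) (q ^ 5))
                 else 1 / (qpoch_inf (q ^ 2) (q ^ 5) * qpoch_inf (q ^ 3) (q ^ 5)))"
  shows "(\<lambda>n. q ^ (n * (n + A)) * ip q (int n)) sums R"
    "summable (\<lambda>n. norm (q ^ (n * (n + A)) * ip q (int n)))"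
proof -
  have "((\<lambda>n. q ^ (n * (n + A)) * ip q (int n)) sums R) \<and> summable (\<lambda>n. norm (q ^ (n * (n + A)) * ip q (int n)))"
  proof (cases "q = 0")
    case True
    have f': "q ^ (n * (n + A)) * ip q (int n) = (if n = 0 then 1 else 0)" for n
      by (simp add: True)
    have f: "(\<lambda>n. q ^ (n * (n + A)) * ip q (int n)) = (\<lambda>n. if n = 0 then 1 else 0)"
      by (rule ext) (simp add: f')
    have R1: "R = 1" unfolding R_def True by (simp add: qpoch_inf_zero_base)
    have "(\<lambda>n. if n = 0 then 1 else 0) sums (1::complex)"
      using sums_single[of 0 "\<lambda>_. 1::complex"] by simp
    moreover have "summable (\<lambda>n. norm (if n = (0::nat) then 1 else (0::complex)))"
    proof -
      have "(\<lambda>n::nat. norm (if n = 0 then 1 else (0::complex))) = (\<lambda>n. if n = 0 then 1 else 0)"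
        by (rule ext) simp
      thus ?thesis using sums_summable[OF sums_single[of 0 "\<lambda>_. 1::real"]] by simp
    qed
    ultimately show ?thesis unfolding f R1 by (simp add: f')
  next
    case False
    have q5: "norm (q ^ c) < 1" if "c > 0" for c
      unfolding norm_power using power_less_one_iff[of "norm q" c] that q by simp
    have nz: "qpoch_inf (q ^ c) (q ^ 5) \<noteq> 0" if "c > 0" for c
      by (rule qpoch_inf_nz[OF q5 q5]) (use that in simp_all)
    note RR' = RR[OF q False A]
    have "qpoch_inf (q ^ (2 + 2 * A)) (q ^ 5) * qpoch_inf (q ^ (3 - 2 * A)) (q ^ 5) * qpoch_inf (q ^ 5) (q ^ 5) / qpoch_inf q q = R"
    proof (cases "A = 0")
      case True
      show ?thesis unfolding R_def dissect[OF q] using True nz[of 1] nz[of 2] nz[of 3] nz[of 4] nz[of 5]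
        by (simp add: field_simps power2_eq_square)
    next
      case False
      hence A1: "A = 1" using A by simp
      have e: "q ^ (2 + 2 * A) = q ^ 4" "q ^ (3 - 2 * A) = q ^ 1" using A1 by simp_all
      show ?thesis unfolding R_def dissect[OF q] e using A1 nz[of 1] nz[of 2] nz[of 3] nz[of 4] nz[of 5]
        by (simp add: field_simps)
    qed
    thus ?thesis using RR' by simp
  qed
  thus "(\<lambda>n. q ^ (n * (n + A)) * ip q (int n)) sums R" "summable (\<lambda>n. norm (q ^ (n * (n + A)) * ip q (int n)))"
    by auto
qed

theorem theorem4p6:
  fixes r :: complex
  assumes "norm r < 1"
  defines "q \<equiv> r ^ 2"
  defines "Q \<equiv> (\<lambda>i j k::nat. 3*i^2 + 2*j^2 + k^2 + 4*i*j + 2*i*k + 2*j*k)"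
  shows "((tsum_term r (\<lambda>i j k. Q i j k) has_sum qpoch_inf (- r) q / (qpoch_inf q (q^5) * qpoch_inf (q^4) (q^5))) UNIV)
   \<and> ((tsum_term r (\<lambda>i j k. Q i j k + i + k) has_sum qpoch_inf (- q) q / (qpoch_inf q (q^5) * qpoch_inf (q^4) (q^5))) UNIV)
   \<and> ((tsum_term r (\<lambda>i j k. Q i j k - i - k) has_sum 2 * qpoch_inf (- q) q / (qpoch_inf q (q^5) * qpoch_inf (q^4) (q^5))) UNIV)
   \<and> ((tsum_term r (\<lambda>i j k. Q i j k + 2*i + 2*j) has_sum qpoch_inf (- r) q / (qpoch_inf (q^2) (q^5) * qpoch_inf (q^3) (q^5))) UNIV)
   \<and> ((tsum_term r (\<lambda>i j k. Q i j k + 3*i + 2*j + k) has_sum qpoch_inf (- q) q / (qpoch_inf (q^2) (q^5) * qpoch_inf (q^3) (q^5))) UNIV)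
   \<and> ((tsum_term r (\<lambda>i j k. Q i j k + i + 2*j - k) has_sum 2 * qpoch_inf (- q) q / (qpoch_inf (q^2) (q^5) * qpoch_inf (q^3) (q^5))) UNIV)"
proof -
  have r: "norm r < 1" by (rule assms(1))
  have nq: "norm q < 1" unfolding q_def using r by (simp add: norm_power power_less_one_iff)
  define R0 where "R0 = 1 / (qpoch_inf q (q ^ 5) * qpoch_inf (q ^ 4) (q ^ 5))"
  define R1 where "R1 = 1 / (qpoch_inf (q ^ 2) (q ^ 5) * qpoch_inf (q ^ 3) (q ^ 5))"
  have RR0: "(\<lambda>n. (r^2) ^ (n * (n + 0)) * ip (r^2) (int n)) sums R0"
       "summable (\<lambda>n. norm ((r^2) ^ (n * (n + 0)) * ip (r^2) (int n)))"
    using RR_final[OF nq, of 0] unfolding R0_def q_def by simp_all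
  have RR1: "(\<lambda>n. (r^2) ^ (n * (n + 1)) * ip (r^2) (int n)) sums R1"
       "summable (\<lambda>n. norm ((r^2) ^ (n * (n + 1)) * ip (r^2) (int n)))"
    using RR_final[OF nq, of 1] unfolding R1_def q_def by simp_all
  have B: "Q i j k = 2 * ((i + j) * (i + j)) + (2 * T (int i) + i) + (2 * T (int k) + k) + 2 * (i + j) * k" for i j k
  proof -
    have B0: "Q i j k = 2 * ((i + j) * (i + j)) + i * i + k * k + 2 * (i + j) * k"
      unfolding Q_def by (simp add: power2_eq_square algebra_simps)
    show ?thesis unfolding B0 T2[of i] T2[of k] by simp
  qed
  have m1: "qpoch_inf (- 1) q = 2 * qpoch_inf (- q) q"
    using qpoch_inf_shift[OF nq, of "- 1"] by simp
  have P1: "(tsum_term r (\<lambda>i j k. Q i j k) has_sum qpoch_inf (- (r ^ 1)) (r ^ 2) * R0) UNIV"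
    by (rule generic[OF r _ _ RR0]) (simp_all add: B)
  have P2: "(tsum_term r (\<lambda>i j k. Q i j k + i + k) has_sum qpoch_inf (- (r ^ 2)) (r ^ 2) * R0) UNIV"
    by (rule generic[OF r _ _ RR0]) (simp_all add: B)
  have P3: "(tsum_term r (\<lambda>i j k. Q i j k - i - k) has_sum qpoch_inf (- (r ^ 0)) (r ^ 2) * R0) UNIV"
    by (rule generic[OF r _ _ RR0]) (simp_all add: B)
  have P4: "(tsum_term r (\<lambda>i j k. Q i j k + 2*i + 2*j) has_sum qpoch_inf (- (r ^ 1)) (r ^ 2) * R1) UNIV"
    by (rule generic[OF r _ _ RR1]) (simp_all add: B algebra_simps)
  have P5: "(tsum_term r (\<lambda>i j k. Q i j k + 3*i + 2*j + k) has_sum qpoch_inf (- (r ^ 2)) (r ^ 2) * R1) UNIV"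
    by (rule generic[OF r _ _ RR1]) (simp_all add: B algebra_simps)
  have P6: "(tsum_term r (\<lambda>i j k. Q i j k + i + 2*j - k) has_sum qpoch_inf (- (r ^ 0)) (r ^ 2) * R1) UNIV"
    by (rule generic[OF r _ _ RR1]) (simp_all add: B algebra_simps)
  have m1': "qpoch_inf (- (r ^ 0)) (r ^ 2) = 2 * qpoch_inf (- q) q" using m1 unfolding q_def by simp
  have E1: "qpoch_inf (- (r ^ 1)) (r ^ 2) * R0 = qpoch_inf (- r) q / (qpoch_inf q (q^5) * qpoch_inf (q^4) (q^5))"
    unfolding R0_def q_def by simp
  have E2: "qpoch_inf (- (r ^ 2)) (r ^ 2) * R0 = qpoch_inf (- q) q / (qpoch_inf q (q^5) * qpoch_inf (q^4) (q^5))"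
    unfolding R0_def q_def by simp
  have E3: "qpoch_inf (- (r ^ 0)) (r ^ 2) * R0 = 2 * qpoch_inf (- q) q / (qpoch_inf q (q^5) * qpoch_inf (q^4) (q^5))"
    unfolding R0_def m1' by simp
  have E4: "qpoch_inf (- (r ^ 1)) (r ^ 2) * R1 = qpoch_inf (- r) q / (qpoch_inf (q^2) (q^5) * qpoch_inf (q^3) (q^5))"
    unfolding R1_def q_def by simp
  have E5: "qpoch_inf (- (r ^ 2)) (r ^ 2) * R1 = qpoch_inf (- q) q / (qpoch_inf (q^2) (q^5) * qpoch_inf (q^3) (q^5))"
    unfolding R1_def q_def by simp
  have E6: "qpoch_inf (- (r ^ 0)) (r ^ 2) * R1 = 2 * qpoch_inf (- q) q / (qpoch_inf (q^2) (q^5) * qpoch_inf (q^3) (q^5))"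
    unfolding R1_def m1' by simp
  show ?thesis
    using P1 P2 P3 P4 P5 P6 unfolding E1 E2 E3 E4 E5 E6 by blast
qed


end
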